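(* Let $f=1_{[0,1]}$ and let $\gamma<1$ (with $\gamma>0$). For each $n$, let $N$ be a Poisson process on $\mathbb{R}$ with intensity $nf$ with respect to Lebesgue measure. Then there exist $\delta<1$ and a constant $c>0$, both independent of $n$, such that for all $n$ large enough $$\mathbb{E}\big(\|\tilde f^H_{n,\gamma}-f\|_2^2\big)\ge\frac{c}{n^\delta}.$$
   Context: Haar basis: $\phi=1_{[0,1]}$, $\psi=1_{[0,1/2]}-1_{(1/2,1]}$, $\phi_k(x)=\phi(x-k)$, $\psi_{j,k}(x)=2^{j/2}\psi(2^jx-k)$ ($j\ge0$, $k\in\mathbb{Z}$). $\Lambda=\{(j,k):j\ge-1,k\in\mathbb{Z}\}$; $\varphi_\lambda=\phi_k$ if $\lambda=(-1,k)$ and $\varphi_\lambda=\psi_{j,k}$ if $\lambda=(j,k)$, $j\ge0$. Define $\hat\beta_\lambda=\frac1n\sum_{T\in N}\varphi_\lambda(T)$, $\hat V_{\lambda,n}=\frac1{n^2}\sum_{T\in N}\varphi_\lambda^2(T)$, $$\tilde V_{\lambda,n}=\hat V_{\lambda,n}+\sqrt{2\gamma\ln n\,\hat V_{\lambda,n}\frac{\|\varphi_\lambda\|_\infty^2}{n^2}}+3\gamma\ln n\frac{\|\varphi_\lambda\|_\infty^2}{n^2},\qquad \eta_{\lambda,\gamma}=\sqrt{2\gamma\tilde V_{\lambda,n}\ln n}+\frac{\gamma\ln n}{3n}\|\varphi_\lambda\|_\infty.$$ Let $j_0$ be the integer with $2^{j_0}\le n<2^{j_0+1}$ and $\Gamma_n=\{(j,k)\in\Lambda: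 j\le j_0\}$. The estimator is $\tilde f^H_{n,\gamma}=\sum_{\lambda\in\Gamma_n}\hat\beta_\lambda 1_{\{|\hat\beta_\lambda|\ge\eta_{\lambda,\gamma}\}}\varphi_\lambda$. *)

theory Defs
  imports "HOL-Probability.Probability" "HOL-Library.Multiset"
begin

definition haar_phi :: "real \<Rightarrow> real" where
  "haar_phi x = indicator {0..1} x"

definition haar_psi :: "real \<Rightarrow> real" where
  "haar_psi x = indicator {0..1/2} x - indicator {1/2<..1} x"

definition Lambda :: "(int \<times> int) set" where
  "Lambda = {(j, k). j \<ge> -1}"

definition haar :: "int \<times> int \<Rightarrow> real \<Rightarrow> real" where
  "haar lam x = (case lam of (j, k) \<Rightarrow>
     if j = -1 then haar_phi (x - real_of_int k)
     else 2 powr (real_of_int j / 2) * haar_psi (2 powr (real_of_int j) * x - real_of_int k))"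

definition sup_norm :: "(real \<Rightarrow> real) \<Rightarrow> real" where
  "sup_norm g = (SUP x. \<bar>g x\<bar>)"

definition beta_hat :: "real \<Rightarrow> real multiset \<Rightarrow> int \<times> int \<Rightarrow> real" where
  "beta_hat n N lam = (1 / n) * (\<Sum>T\<in>#N. haar lam T)"

definition V_hat :: "real \<Rightarrow> real multiset \<Rightarrow> int \<times> int \<Rightarrow> real" where
  "V_hat n N lam = (1 / n\<^sup>2) * (\<Sum>T\<in>#N. (haar lam T)\<^sup>2)"

definition V_tilde :: "real \<Rightarrow> real \<Rightarrow> real multiset \<Rightarrow> int \<times> int \<Rightarrow> real" where
  "V_tilde gamma n N lam =
     V_hat n N lam
     + sqrt (2 * gamma * ln n * V_hat n N lam * (sup_norm (haar lam))\<^sup>2 / n\<^sup>2)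
     + 3 * gamma * ln n * (sup_norm (haar lam))\<^sup>2 / n\<^sup>2"

definition eta :: "real \<Rightarrow> real \<Rightarrow> real multiset \<Rightarrow> int \<times> int \<Rightarrow> real" where
  "eta gamma n N lam =
     sqrt (2 * gamma * V_tilde gamma n N lam * ln n)
     + gamma * ln n / (3 * n) * sup_norm (haar lam)"

definition j0 :: "real \<Rightarrow> int" where
  "j0 n = (THE j. 2 powr (real_of_int j) \<le> n \<and> n < 2 powr (real_of_int j + 1))"

definition Gamma_n :: "real \<Rightarrow> (int \<times> int) set" where
  "Gamma_n n = {(j, k) \<in> Lambda. j \<le> j0 n}"

text \<open>The estimator; for each x only finitely many summands are nonzero.\<close>
definition f_tilde_H :: "real \<Rightarrow> real \<Rightarrow> real multiset \<Rightarrow> real \<Rightarrow> real" where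
  "f_tilde_H n gamma N x =
     infsum (\<lambda>lam. (if \<bar>beta_hat n N lam\<bar> \<ge> eta gamma n N lam then beta_hat n N lam else 0)
                    * haar lam x) (Gamma_n n)"

definition count_in :: "real set \<Rightarrow> real multiset \<Rightarrow> nat" where
  "count_in A N = size (filter_mset (\<lambda>x. x \<in> A) N)"

text \<open>Realisations are finite point configurations (multisets),
  which is adequate for a finite intensity measure.\<close>
definition poisson_process ::
  "'w measure \<Rightarrow> ('w \<Rightarrow> real multiset) \<Rightarrow> (real \<Rightarrow> real) \<Rightarrow> bool" where
  "poisson_process M N h \<longleftrightarrow>
     prob_space M \<and>
     (\<forall>A \<in> sets borel.
        (\<lambda>\<omega>. count_in A (N \<omega>)) \<in> measurable M (count_space UNIV) \<and>
        (\<forall>k::nat. measure M {\<omega> \<in> space M. count_in A (N \<omega>) = k}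
           = (set_lebesgue_integral lborel A h) ^ k / fact k
             * exp (- set_lebesgue_integral lborel A h))) \<and>
     (\<forall>(I::nat set) A. finite I \<longrightarrow> (\<forall>i\<in>I. A i \<in> sets borel) \<longrightarrow> disjoint_family_on A I \<longrightarrow>
        prob_space.indep_vars M (\<lambda>_. count_space UNIV) (\<lambda>i \<omega>. count_in (A i) (N \<omega>)) I)"

end

theory Submission
  imports Defs
begin


lemma ln_lower_aux:
  fixes x :: real assumes "1 \<le> x"
  shows "x - 1 - (x - 1)^2/2 \<le> ln x"
proof -
  have "(\<lambda>y. (y - 1 - (y-1)^2/2) - ln y) x \<le> (\<lambda>y. (y - 1 - (y-1)^2/2) - ln y) 1"
  proof (rule DERIV_nonpos_imp_nonincreasing[OF assms])
    fix z :: real assume z: "1 \<le> z" "z \<le> x"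
    show "\<exists>D. ((\<lambda>y. (y - 1 - (y-1)^2/2) - ln y) has_real_derivative D) (at z) \<and> D \<le> 0"
    proof (intro exI conjI)
      show "((\<lambda>y. (y - 1 - (y-1)^2/2) - ln y) has_real_derivative (1 - (z - 1) - 1/z)) (at z)"
        using z by (auto intro!: derivative_eq_intros simp: field_simps power2_eq_square)
      have "z * (2 - z) = 1 - (z-1)^2" by (simp add: power2_eq_square algebra_simps)
      then have "z * (2 - z) \<le> 1" by simp
      then show "1 - (z - 1) - 1/z \<le> 0" using z by (simp add: field_simps)
    qed
  qed
  then show ?thesis by simp
qed

lemma ln_upper_aux:
  fixes x :: real assumes "1 \<le> x"
  shows "ln x \<le> (x - 1/x)/2"
proof -
  have "(\<lambda>y. ln y - (y - 1/y)/2) x \<le> (\<lambda>y. ln y - (y - 1/y)/2) 1"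
  proof (rule DERIV_nonpos_imp_nonincreasing[OF assms])
    fix z :: real assume z: "1 \<le> z" "z \<le> x"
    show "\<exists>D. ((\<lambda>y. ln y - (y - 1/y)/2) has_real_derivative D) (at z) \<and> D \<le> 0"
    proof (intro exI conjI)
      show "((\<lambda>y. ln y - (y - 1/y)/2) has_real_derivative (1/z - (1 + 1/z^2)/2)) (at z)"
        using z by (auto intro!: derivative_eq_intros simp: field_simps power2_eq_square)
      have "0 \<le> (z-1)^2" by simp
      then show "1/z - (1 + 1/z^2)/2 \<le> 0" using z by (simp add: field_simps power2_eq_square)
    qed
  qed
  then show ?thesis by simp
qed

definition phiKL :: "real \<Rightarrow> real \<Rightarrow> real" where
  "phiKL mu a = a * ln (a / mu) - a + mu"

lemma phiKL_above:
  assumes "0 < mu" "mu \<le> a"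
  shows "phiKL mu a \<le> (a - mu)^2 / (2 * mu)"
proof -
  define y where "y = a / mu"
  have y: "1 \<le> y" using assms by (simp add: y_def field_simps)
  have a: "a = mu * y" using assms by (simp add: y_def)
  have "ln y \<le> (y - 1/y)/2" by (rule ln_upper_aux[OF y])
  hence "mu * y * ln y \<le> mu * y * ((y - 1/y)/2)" using assms y by (intro mult_left_mono) auto
  also have "mu * y * ((y - 1/y)/2) = mu * (y^2 - 1)/2" using y by (simp add: field_simps power2_eq_square)
  finally have "mu * y * ln y \<le> mu * (y^2 - 1)/2" .
  have "phiKL mu a = mu * y * ln y - mu * y + mu" unfolding phiKL_def a using assms by (simp add: y_def)
  also have "\<dots> \<le> mu * (y^2 - 1)/2 - mu * y + mu" using \<open>mu * y * ln y \<le> mu * (y^2 - 1)/2\<close> by simp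
  also have "\<dots> = (a - mu)^2 / (2 * mu)" using assms by (simp add: a field_simps power2_eq_square)
  finally show ?thesis .
qed

lemma phiKL_below:
  assumes "0 < a" "a \<le> mu"
  shows "phiKL mu a \<le> (mu - a)^2 / (2 * a)"
proof -
  define x where "x = mu / a"
  have x: "1 \<le> x" using assms by (simp add: x_def field_simps)
  have m: "mu = a * x" using assms by (simp add: x_def)
  have "x - 1 - (x-1)^2/2 \<le> ln x" by (rule ln_lower_aux[OF x])
  have l: "ln (a / mu) = - ln x" using assms by (simp add: x_def ln_div)
  have "phiKL mu a = a * (x - 1 - ln x)" unfolding phiKL_def l by (simp add: m algebra_simps)
  also have "\<dots> \<le> a * ((x-1)^2/2)" using \<open>x - 1 - (x-1)^2/2 \<le> ln x\<close> assms by (intro mult_left_mono) auto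
  also have "\<dots> = (mu - a)^2 / (2 * a)" using assms by (simp add: m field_simps power2_eq_square)
  finally show ?thesis .
qed

lemma fact_upper:
  "n \<ge> 1 \<Longrightarrow> fact n \<le> exp 1 * real n ^ (n+1) * exp (- real n)"
proof (induction n rule: dec_induct)
  case base then show ?case by (simp add: exp_minus)
next
  case (step n)
  have n: "real n \<ge> 1" using step by simp
  have l: "ln (1 + 1/real n) \<ge> 1/(real n + 1)"
  proof -
    have "ln (1/(1 + 1/real n)) \<le> 1/(1 + 1/real n) - 1" using n by (intro ln_le_minus_one) (simp add: add_pos_pos)
    moreover have "ln (1/(1 + 1/real n)) = - ln (1 + 1/real n)" using n by (simp add: ln_div)
    moreover have "1/(1 + 1/real n) - 1 = - 1/(real n + 1)" using n by (simp add: field_simps)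
    ultimately show ?thesis by simp
  qed
  have "exp 1 \<le> (1 + 1/real n) powr (real n + 1)"
  proof -
    have "1 \<le> (real n + 1) * ln (1 + 1/real n)" using l n by (simp add: field_simps)
    then have "exp 1 \<le> exp ((real n + 1) * ln (1 + 1/real n))" by simp
    also have "\<dots> = (1 + 1/real n) powr (real n + 1)"
      using n by (simp add: powr_def add_pos_pos less_imp_neq[symmetric])
    finally show ?thesis .
  qed
  also have "(1 + 1/real n) powr (real n + 1) = ((real n + 1)/real n) ^ (n+1)"
    using n by (subst powr_realpow[symmetric]) (auto simp: field_simps)
  finally have e: "exp 1 * real n ^ (n+1) \<le> (real n + 1) ^ (n+1)"
    using n by (simp add: field_simps power_divide)
  have "fact (Suc n) = (real n + 1) * fact n" by simp
  also have "\<dots> \<le> (real n + 1) * (exp 1 * real n ^ (n+1) * exp (- real n))"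
    using step by (intro mult_left_mono) auto
  also have "\<dots> = (exp 1 * real n ^ (n+1)) * (real n + 1) * exp (- real n)" by simp
  also have "\<dots> \<le> (real n + 1) ^ (n+1) * (real n + 1) * exp (- real n)"
    using e by (intro mult_right_mono) auto
  also have "\<dots> = exp 1 * real (Suc n) ^ (Suc n + 1) * exp (- real (Suc n))"
    by (simp add: exp_diff exp_minus field_simps)
  finally show ?case .
qed

lemma poisson_pmf_lower:
  assumes "0 < mu" "a \<ge> 1"
  shows "mu ^ a / fact a * exp (- mu) \<ge> exp (- phiKL mu (real a)) / (exp 1 * real a)"
proof -
  have ra: "real a \<ge> 1" using assms by simp
  have f: "fact a \<le> exp 1 * real a ^ (a+1) * exp (- real a)" by (rule fact_upper[OF assms(2)])
  have "exp (- phiKL mu (real a)) = mu ^ a * exp (- mu) * exp (real a) / real a ^ a"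
  proof -
    have eq: "- phiKL mu (real a) = real a * ln mu + real a - mu - real a * ln (real a)"
      unfolding phiKL_def using assms ra by (simp add: ln_div algebra_simps)
    have "exp (- phiKL mu (real a)) = exp (real a * ln mu) * exp (real a) / exp mu / exp (real a * ln (real a))"
      by (simp only: eq exp_add exp_diff)
    also have "\<dots> = exp (real a * ln mu) * exp (- mu) * exp (real a) / exp (real a * ln (real a))"
      by (simp add: exp_minus field_simps)
    finally have "exp (- phiKL mu (real a)) = exp (real a * ln mu) * exp (- mu) * exp (real a) / exp (real a * ln (real a))" .
    also have "exp (real a * ln mu) = mu ^ a" using assms by (simp add: exp_of_nat_mult)
    also have "exp (real a * ln (real a)) = real a ^ a" using ra by (simp add: exp_of_nat_mult)
    finally show ?thesis .
  qed
  then have "exp (- phiKL mu (real a)) / (exp 1 * real a) = mu ^ a * exp (- mu) / (exp 1 * real a ^ (a+1) * exp (- real a))"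
    using ra assms(1) by (simp add: exp_minus field_simps)
  also have "\<dots> \<le> mu ^ a * exp (- mu) / fact a"
    using f assms by (intro divide_left_mono) auto
  finally show ?thesis by simp
qed



lemma zdiv_eq_iff':
  fixes m q c :: int assumes "0 < q"
  shows "m div q = c \<longleftrightarrow> c*q \<le> m \<and> m < c*q + q"
proof
  assume "m div q = c"
  moreover have "q * (m div q) + m mod q = m" by simp
  moreover have "0 \<le> m mod q" "m mod q < q" using assms by auto
  ultimately show "c*q \<le> m \<and> m < c*q + q" by (metis add.commute add_less_cancel_left le_add_same_cancel1 mult.commute)
next
  assume h: "c*q \<le> m \<and> m < c*q + q"
  then have "m - c*q \<ge> 0" "m - c*q < q" by auto
  then have "(m - c*q) div q = 0" by (simp add: div_pos_pos_trivial)
  moreover have "(m - c*q) div q = m div q - c" using assms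
    by (metis add_diff_cancel_left' diff_add_cancel div_mult_self1 less_irrefl mult.commute)
  ultimately show "m div q = c" by simp
qed

lemma int_between:
  fixes X :: real and m A B :: int
  assumes "m < X" "X < m + 1"
  shows "(A \<le> X \<and> X \<le> B) \<longleftrightarrow> (A \<le> m \<and> m + 1 \<le> B)"
    and "(A < X \<and> X \<le> B) \<longleftrightarrow> (A \<le> m \<and> m + 1 \<le> B)"
proof -
  have 1: "A \<le> X \<longleftrightarrow> A \<le> m" using assms
    by (smt (verit, best) of_int_le_iff of_int_1 of_int_add zle_add1_eq_le)
  have 2: "A < X \<longleftrightarrow> A \<le> m" using assms
    by (smt (verit, best) of_int_le_iff of_int_1 of_int_add zle_add1_eq_le)
  have 3: "X \<le> B \<longleftrightarrow> m + 1 \<le> B" using assms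
    by (smt (verit, best) of_int_le_iff of_int_1 of_int_add zle_add1_eq_le)
  show "(A \<le> X \<and> X \<le> B) \<longleftrightarrow> (A \<le> m \<and> m + 1 \<le> B)" using 1 3 by blast
  show "(A < X \<and> X \<le> B) \<longleftrightarrow> (A \<le> m \<and> m + 1 \<le> B)" using 2 3 by blast
qed

definition ps :: "int \<Rightarrow> real" where
  "ps r = (if r = 0 then 1 else if r = 1 then -1 else 0)"

definition Hf :: "nat \<Rightarrow> int \<Rightarrow> int \<Rightarrow> int \<Rightarrow> real" where
  "Hf jn j' k' m = (if j' = -1 then (if m div 2^(Suc jn) = k' then 1 else 0)
     else 2 powr (real_of_int j' / 2) * ps (m div 2^(nat (int jn - j')) - 2*k'))"

lemma haar_cell:
  fixes x :: real
  assumes j: "-1 \<le> j'" "j' \<le> int jn"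
    and c: "m < x * 2^(Suc jn)" "x * 2^(Suc jn) < m + 1"
  shows "haar (j', k') x = Hf jn j' k' m"
proof (cases "j' = -1")
  case True
  define X where "X = x * 2^(Suc jn)"
  have X: "m < X" "X < m+1" using c by (auto simp: X_def)
  have h1: "haar (j', k') x = indicator {0..1} (x - k')"
    using True by (simp add: haar_def haar_phi_def)
  have "(x - k' \<in> {0..1}) \<longleftrightarrow> (k' * 2^(Suc jn) \<le> X \<and> X \<le> (k'+1) * 2^(Suc jn))"
  proof -
    have p: "(0::real) < 2^(Suc jn)" by simp
    have "(x - k' \<in> {0..1}) \<longleftrightarrow> (0 * 2^(Suc jn) \<le> (x - k') * 2^(Suc jn) \<and> (x - k') * 2^(Suc jn) \<le> 1 * 2^(Suc jn))"
      using mult_le_cancel_right_pos[OF p] by (simp only: atLeastAtMost_iff)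
    then show ?thesis by (simp add: X_def algebra_simps)
  qed
  also have "\<dots> \<longleftrightarrow> (k' * 2^(Suc jn) \<le> m \<and> m + 1 \<le> (k'+1) * 2^(Suc jn))"
    using int_between(1)[OF X, of "k' * 2^(Suc jn)" "(k'+1) * 2^(Suc jn)"] by simp
  also have "\<dots> \<longleftrightarrow> m div 2^(Suc jn) = k'"
    by (subst zdiv_eq_iff') (auto simp: algebra_simps)
  finally have "(x - k' \<in> {0..1}) \<longleftrightarrow> m div 2^(Suc jn) = k'" .
  then show ?thesis using True h1 by (simp add: Hf_def indicator_def)
next
  case False
  then have j0: "0 \<le> j'" using j by simp
  define jj where "jj = nat j'"
  have jj: "j' = int jj" "jj \<le> jn" using j0 j by (auto simp: jj_def)
  define q :: int where "q = 2^(jn - jj)"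
  have q: "q > 0" by (simp add: q_def)
  have nq: "nat (int jn - j') = jn - jj" using jj by simp
  have pw: "(2::real)^(Suc jn) = 2 * q * 2^jj"
    using jj by (simp add: q_def power_add[symmetric])
  have qj: "real_of_int q * 2^jj = 2^jn"
    using jj by (simp add: q_def power_add[symmetric])
  define X where "X = x * 2^(Suc jn)"
  have X: "m < X" "X < m+1" using c by (auto simp: X_def)
  define y where "y = 2 powr (real_of_int j') * x - k'"
  have y: "y = (X - 2*q*k') / (2*q)"
    using q qj by (simp add: y_def X_def jj powr_realpow field_simps)
  have hp: "haar (j', k') x = 2 powr (real_of_int j' / 2) * haar_psi y"
    using False by (simp add: haar_def y_def)
  have A: "(0 \<le> y \<and> y \<le> 1/2) \<longleftrightarrow> (2*q*k' \<le> X \<and> X \<le> 2*q*k' + q)"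
    using q by (simp add: y field_simps; simp add: algebra_simps; linarith)
  have B: "(1/2 < y \<and> y \<le> 1) \<longleftrightarrow> (2*q*k' + q < X \<and> X \<le> 2*q*k' + 2*q)"
    using q by (simp add: y field_simps; simp add: algebra_simps; linarith)
  have A': "(0 \<le> y \<and> y \<le> 1/2) \<longleftrightarrow> m div q = 2*k'"
    unfolding A using int_between(1)[OF X, of "2*q*k'" "2*q*k' + q"] zdiv_eq_iff'[OF q, of m "2*k'"]
    by (auto simp: algebra_simps)
  have B': "(1/2 < y \<and> y \<le> 1) \<longleftrightarrow> m div q = 2*k' + 1"
    unfolding B using int_between(2)[OF X, of "2*q*k' + q" "2*q*k' + 2*q"] zdiv_eq_iff'[OF q, of m "2*k'+1"]
    by (auto simp: algebra_simps)
  have "haar_psi y = ps (m div q - 2*k')"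
    using A' B' by (auto simp: haar_psi_def ps_def indicator_def)
  then show ?thesis using False hp by (simp add: Hf_def nq q_def)
qed

lemma sum_blocks:
  fixes g :: "nat \<Rightarrow> 'a::comm_monoid_add"
  shows "(\<Sum>i<n*k. g i) = (\<Sum>b<n. \<Sum>l<k. g (b*k + l))"
proof -
  have "(\<Sum>i<n*k. g i) = (\<Sum>b<n. sum g {b*k..<b*k+k})" by (simp add: sum.nat_group)
  also have "\<dots> = (\<Sum>b<n. \<Sum>l<k. g (b*k + l))"
  proof (rule sum.cong[OF refl])
    fix b
    have "sum g {0 + b*k..<k + b*k} = (\<Sum>l\<in>{0..<k}. g (l + b*k))" by (rule sum.shift_bounds_nat_ivl)
    then show "sum g {b*k..<b*k+k} = (\<Sum>l<k. g (b*k + l))" by (simp add: atLeast0LessThan add.commute)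
  qed
  finally show ?thesis .
qed

lemma div_block: "l < q \<Longrightarrow> (b*q + l) div q = (b::nat)"
  by simp

lemma ps_block:
  assumes "0 < q"
  shows "(\<Sum>l<2*q. ps (2*e + int (l div q))) = 0"
proof -
  have "(\<Sum>l<2*q. ps (2*e + int (l div q))) = (\<Sum>b<2. \<Sum>l<q. ps (2*e + int ((b*q + l) div q)))"
    by (rule sum_blocks)
  also have "\<dots> = (\<Sum>b<2. \<Sum>l<q. ps (2*e + int b))"
    by (intro sum.cong refl) simp
  also have "\<dots> = real q * (ps (2*e) + ps (2*e + 1))"
    by (simp add: numeral_2_eq_2 algebra_simps)
  also have "ps (2*e) + ps (2*e + 1) = 0" by (auto simp: ps_def)
  finally show ?thesis by simp
qed

lemma divconst:
  fixes k :: int and P r :: nat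
  assumes "i < 2*P" "0 < P"
  shows "(2*int P*k + int i) div (2*int P*int r) = k div int r"
proof -
  have "(2*int P*k + int i) div (2*int P) = k"
    using assms by (subst zdiv_eq_iff') (auto simp: algebra_simps)
  then show ?thesis by (simp add: zdiv_zmult2_eq)
qed

lemma ps_sum0:
  assumes "0 < P" shows "(\<Sum>i<2*P. ps (int (i div P))) = 0"
  using ps_block[OF assms, of 0] by simp

lemma ortho:
  fixes k k' j' :: int and j jn :: nat
  assumes jj: "j \<le> jn" "-1 \<le> j'" "j' \<le> int jn"
  defines "P \<equiv> (2::nat)^(jn - j)"
  shows "(\<Sum>i<2*P. ps (int (i div P)) * Hf jn j' k' (2*int P*k + int i))
         = (if j' = int j \<and> k' = k then 2 * real P * 2 powr (real j / 2) else 0)"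
proof -
  have P0: "0 < P" by (simp add: P_def)
  consider (lt) "j' < int j" | (eq) "j' = int j" | (gt) "j' > int j" by linarith
  then show ?thesis
  proof cases
    case lt
    have c: "Hf jn j' k' (2*int P*k + int i) = Hf jn j' k' (2*int P*k)" if "i < 2*P" for i
    proof (cases "j' = -1")
      case True
      have ex: "Suc jn = Suc ((jn - j) + j)" using jj by simp
      have e: "(2::int)^(Suc jn) = 2 * int P * int (2^j)"
        unfolding P_def of_nat_power ex by (simp only: power_Suc power_add of_nat_numeral mult.assoc)
      have A: "(2*int P*k + int i) div 2^(Suc jn) = k div 2^j"
        using divconst[OF that P0, of k "2^j"] unfolding e by simp
      have B: "(2*int P*k) div 2^(Suc jn) = k div 2^j"
        using divconst[of 0 P k "2^j"] P0 unfolding e by simp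
      show ?thesis unfolding Hf_def using True A B by simp
    next
      case False
      then have "0 \<le> j'" using jj by simp
      then obtain jj' where jj': "j' = int jj'" by (metis nonneg_eq_int)
      have ex: "nat (int jn - j') = Suc ((jn - j) + (j - jj' - 1))" using jj lt jj' by simp
      have e: "(2::int)^(nat (int jn - j')) = 2 * int P * int (2^(j - jj' - 1))"
        unfolding P_def of_nat_power ex by (simp only: power_Suc power_add of_nat_numeral mult.assoc)
      have A: "(2*int P*k + int i) div 2^(nat (int jn - j')) = k div 2^(j - jj' - 1)"
        using divconst[OF that P0, of k "2^(j - jj' - 1)"] unfolding e by simp
      have B: "(2*int P*k) div 2^(nat (int jn - j')) = k div 2^(j - jj' - 1)"
        using divconst[of 0 P k "2^(j - jj' - 1)"] P0 unfolding e by simp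
      show ?thesis unfolding Hf_def using False A B by simp
    qed
    have "(\<Sum>i<2*P. ps (int (i div P)) * Hf jn j' k' (2*int P*k + int i))
        = (\<Sum>i<2*P. ps (int (i div P)) * Hf jn j' k' (2*int P*k))"
      using c by (intro sum.cong refl) simp
    also have "\<dots> = 0" by (simp add: sum_distrib_right[symmetric] ps_sum0[OF P0])
    finally show ?thesis using lt by simp
  next
    case eq
    have ex: "nat (int jn - j') = jn - j" using eq by simp
    have e: "(2::int)^(nat (int jn - j')) = int P" unfolding ex P_def by simp
    have d: "(2*int P*k + int i) div int P = 2*k + int (i div P)" for i
    proof -
      have h1: "2*int P*k + int i = int i + (2*k) * int P" by (simp add: algebra_simps)
      have h2: "(int i + (2*k) * int P) div int P = 2*k + int i div int P"
        using P0 by (intro div_mult_self1) simp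
      show ?thesis unfolding h1 h2 by (simp add: zdiv_int)
    qed
    have H0: "Hf jn j' k' m = 2 powr (real_of_int j' / 2) * ps (m div int P - 2*k')" for m
      using eq unfolding Hf_def e by simp
    have H: "Hf jn j' k' (2*int P*k + int i) = 2 powr (real j / 2) * ps (2*k + int (i div P) - 2*k')" for i
      unfolding H0 d using eq by simp
    show ?thesis
    proof (cases "k' = k")
      case True
      have "(\<Sum>i<2*P. ps (int (i div P)) * Hf jn j' k' (2*int P*k + int i))
          = (\<Sum>i<2*P. 2 powr (real j / 2))"
      proof (intro sum.cong refl)
        fix i assume "i \<in> {..<2*P}"
        then have "i div P < 2" using P0 by (simp add: div_less_iff_less_mult mult.commute)
        then have "i div P = 0 \<or> i div P = 1" by linarith
        then show "ps (int (i div P)) * Hf jn j' k' (2*int P*k + int i) = 2 powr (real j / 2)"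
          unfolding H using True by (auto simp: ps_def)
      qed
      then show ?thesis using True eq by simp
    next
      case False
      have "(\<Sum>i<2*P. ps (int (i div P)) * Hf jn j' k' (2*int P*k + int i)) = (\<Sum>i<2*P. 0)"
      proof (intro sum.cong refl)
        fix i assume "i \<in> {..<2*P}"
        then have "i div P < 2" using P0 by (simp add: div_less_iff_less_mult mult.commute)
        then have "i div P = 0 \<or> i div P = 1" by linarith
        then show "ps (int (i div P)) * Hf jn j' k' (2*int P*k + int i) = 0"
          unfolding H using False by (auto simp: ps_def)
      qed
      then show ?thesis using False by simp
    qed
  next
    case gt
    have "0 \<le> j'" using gt by simp
    then obtain jj' where jj0: "j' = int jj'" by (metis nonneg_eq_int)
    have jj': "j' = int jj'" "j < jj'" using jj0 gt by auto
    define q :: nat where "q = 2^(jn - jj')"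
    define r :: nat where "r = 2^(jj' - j - 1)"
    have q0: "0 < q" by (simp add: q_def)
    have r0: "0 < r" by (simp add: r_def)
    have ex: "jn - j = (jj' - j - 1) + Suc (jn - jj')" using jj jj' by simp
    have Pqr: "P = r * 2 * q" unfolding P_def q_def r_def ex power_add power_Suc
      by (simp only: mult.assoc)
    have ex2: "nat (int jn - j') = jn - jj'" using jj' by simp
    have e: "(2::int)^(nat (int jn - j')) = int q" unfolding ex2 q_def by simp
    have H: "Hf jn j' k' m = 2 powr (real jj' / 2) * ps (m div int q - 2*k')" for m
      using jj' unfolding Hf_def e by simp
    have PP: "2*P = (2*r)*(2*q)" using Pqr by simp
    have "(\<Sum>i<2*P. ps (int (i div P)) * Hf jn j' k' (2*int P*k + int i))
        = (\<Sum>b<2*r. \<Sum>l<2*q. ps (int ((b*(2*q) + l) div P)) * Hf jn j' k' (2*int P*k + int (b*(2*q) + l)))"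
      unfolding PP by (simp only: sum_blocks)
    also have "\<dots> = (\<Sum>b<2*r. ps (int (b div r)) * 2 powr (real jj' / 2) *
                  (\<Sum>l<2*q. ps (2*(2*int r*k + int b - k') + int (l div q))))"
    proof (intro sum.cong refl)
      fix b assume "b \<in> {..<2*r}"
      show "(\<Sum>l<2*q. ps (int ((b*(2*q) + l) div P)) * Hf jn j' k' (2*int P*k + int (b*(2*q) + l)))
          = ps (int (b div r)) * 2 powr (real jj' / 2) * (\<Sum>l<2*q. ps (2*(2*int r*k + int b - k') + int (l div q)))"
        unfolding sum_distrib_left
      proof (intro sum.cong refl)
        fix l assume l: "l \<in> {..<2*q}"
        have d1: "(b*(2*q) + l) div P = b div r"
        proof -
          have "(b*(2*q) + l) div P = ((b*(2*q) + l) div (2*q)) div r"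
          proof -
            have "P = (2*q)*r" using Pqr by simp
            then show ?thesis by (simp only: div_mult2_eq)
          qed
          also have "(b*(2*q) + l) div (2*q) = b" using l by simp
          finally show ?thesis .
        qed
        have d2: "(2*int P*k + int (b*(2*q) + l)) div int q = 2*(2*int r*k + int b) + int (l div q)"
        proof -
          have h1: "2*int P*k + int (b*(2*q) + l) = int l + (4*int r*k + 2*int b) * int q"
            using Pqr by (simp add: algebra_simps)
          have h2: "(int l + (4*int r*k + 2*int b) * int q) div int q = (4*int r*k + 2*int b) + int l div int q"
            using q0 by (intro div_mult_self1) simp
          have "(2*int P*k + int (b*(2*q) + l)) div int q = int l div int q + (4*int r*k + 2*int b)"
            unfolding h1 h2 by simp
          then show ?thesis by (simp add: zdiv_int algebra_simps)
        qed
        show "ps (int ((b*(2*q) + l) div P)) * Hf jn j' k' (2*int P*k + int (b*(2*q) + l))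
            = ps (int (b div r)) * 2 powr (real jj' / 2) * ps (2*(2*int r*k + int b - k') + int (l div q))"
          unfolding d1 H d2 by (simp add: algebra_simps)
      qed
    qed
    also have "\<dots> = 0" by (simp only: ps_block[OF q0] mult_zero_right sum.neutral_const)
    finally show ?thesis using gt by simp
  qed
qed



lemma Hf_support:
  fixes m :: int
  assumes m: "0 \<le> m" "m < 2^(Suc jn)" and j: "-1 \<le> j'" "j' \<le> int jn"
    and nz: "Hf jn j' k' m \<noteq> 0"
  shows "0 \<le> k' \<and> k' < 2^jn"
proof (cases "j' = -1")
  case True
  then have "m div 2^(Suc jn) = k'" using nz by (auto simp: Hf_def split: if_splits)
  moreover have "m div 2^(Suc jn) = 0" using m by (simp add: div_pos_pos_trivial)
  ultimately show ?thesis by auto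
next
  case False
  then have "0 \<le> j'" using j by simp
  then obtain jj where jj: "j' = int jj" by (metis nonneg_eq_int)
  have jjn: "jj \<le> jn" using j jj by simp
  define q :: int where "q = 2^(jn - jj)"
  have q0: "q > 0" by (simp add: q_def)
  have e: "(2::int)^(nat (int jn - j')) = q" using jj by (simp add: q_def nat_diff_distrib)
  have "ps (m div q - 2*k') \<noteq> 0" using nz False unfolding Hf_def e by auto
  then have c: "m div q = 2*k' \<or> m div q = 2*k' + 1" by (auto simp: ps_def split: if_splits)
  have ex: "Suc jn = Suc jj + (jn - jj)" using jjn by simp
  have mq: "m < 2^(Suc jj) * q" using m unfolding q_def by (simp only: ex power_add)
  have "0 \<le> m div q" using m q0 by (simp add: pos_imp_zdiv_nonneg_iff)
  moreover have "m div q < 2^(Suc jj)"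
  proof (rule ccontr)
    assume "\<not> m div q < 2^(Suc jj)"
    then have "2^(Suc jj) * q \<le> (m div q) * q" using q0 by (intro mult_right_mono) auto
    also have "(m div q) * q \<le> m"
    proof -
      have h: "q * (m div q) + m mod q = m" by (rule mult_div_mod_eq)
      have "0 \<le> m mod q" using q0 by simp
      then have "q * (m div q) \<le> m" using h by linarith
      then show ?thesis by (simp add: mult.commute)
    qed
    finally show False using mq by simp
  qed
  ultimately have "0 \<le> k'" "2*k' < 2 * 2^jj" using c by auto
  then have "k' < 2^jj" by simp
  also have "(2::int)^jj \<le> 2^jn" using jjn by (simp add: power_increasing)
  finally show ?thesis using \<open>0 \<le> k'\<close> by simp
qed

definition GamS :: "nat \<Rightarrow> (int \<times> int) set" where
  "GamS jn = {(j', k'). -1 \<le> j' \<and> j' \<le> int jn}"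

definition TS :: "nat \<Rightarrow> (int \<times> int) set" where
  "TS jn = {-1..int jn} \<times> {0..<2^jn}"

lemma TS_finite: "finite (TS jn)" by (simp add: TS_def)

lemma TS_sub: "TS jn \<subseteq> GamS jn" by (auto simp: TS_def GamS_def)

lemma cell_value:
  fixes w :: "int \<times> int \<Rightarrow> real" and m :: int
  assumes "0 \<le> m" "m < 2^(Suc jn)" "real_of_int m < x * 2^(Suc jn)" "x * 2^(Suc jn) < real_of_int m + 1"
  shows "infsum (\<lambda>l. w l * haar l x) (GamS jn) = (\<Sum>l\<in>TS jn. w l * Hf jn (fst l) (snd l) m)"
proof -
  have "infsum (\<lambda>l. w l * haar l x) (GamS jn) = infsum (\<lambda>l. w l * Hf jn (fst l) (snd l) m) (GamS jn)"
  proof (rule infsum_cong)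
    fix l assume "l \<in> GamS jn"
    then obtain j' k' where l: "l = (j', k')" "-1 \<le> j'" "j' \<le> int jn" by (auto simp: GamS_def)
    show "w l * haar l x = w l * Hf jn (fst l) (snd l) m"
      using haar_cell[OF l(2,3) assms(3,4)] l by simp
  qed
  also have "\<dots> = infsum (\<lambda>l. w l * Hf jn (fst l) (snd l) m) (TS jn)"
  proof (rule infsum_cong_neutral)
    fix l assume "l \<in> TS jn - GamS jn" then show "w l * Hf jn (fst l) (snd l) m = 0" using TS_sub by auto
  next
    fix l assume l: "l \<in> GamS jn - TS jn"
    then obtain j' k' where l': "l = (j', k')" "-1 \<le> j'" "j' \<le> int jn" by (auto simp: GamS_def)
    have "\<not> (0 \<le> k' \<and> k' < 2^jn)" using l l' by (auto simp: TS_def)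
    then have "Hf jn j' k' m = 0" using Hf_support[OF assms(1,2) l'(2,3)] by blast
    then show "w l * Hf jn (fst l) (snd l) m = 0" using l' by simp
  qed simp
  also have "\<dots> = (\<Sum>l\<in>TS jn. w l * Hf jn (fst l) (snd l) m)" using TS_finite by simp
  finally show ?thesis .
qed

lemma ps_sq_sum:
  assumes "0 < P" shows "(\<Sum>i<2*P. (ps (int (i div P)))^2) = 2 * real P"
proof -
  have "(\<Sum>i<2*P. (ps (int (i div P)))^2) = (\<Sum>i<2*P. 1)"
  proof (intro sum.cong refl)
    fix i assume "i \<in> {..<2*P}"
    then have "i div P < 2" using assms by (simp add: div_less_iff_less_mult mult.commute)
    then have "i div P = 0 \<or> i div P = 1" by linarith
    then show "(ps (int (i div P)))^2 = 1" by (auto simp: ps_def)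
  qed
  then show ?thesis by simp
qed

lemma block_bound:
  fixes w :: "int \<times> int \<Rightarrow> real" and j jn k :: nat
  assumes jk: "j \<le> jn" "k < 2^j"
  defines "P \<equiv> (2::nat)^(jn - j)"
  defines "Fm \<equiv> (\<lambda>m. \<Sum>l\<in>TS jn. w l * Hf jn (fst l) (snd l) m)"
  shows "2 * real P * 2^j * (w (int j, int k))^2 \<le> (\<Sum>i<2*P. (Fm (2*int P*int k + int i) - 1)^2)"
proof -
  have P0: "0 < P" by (simp add: P_def)
  define c where "c = 2 * real P * 2 powr (real j / 2)"
  define S where "S = (\<Sum>i<2*P. ps (int (i div P)) * (Fm (2*int P*int k + int i) - 1))"
  have "S = (\<Sum>i<2*P. ps (int (i div P)) * Fm (2*int P*int k + int i)) - (\<Sum>i<2*P. ps (int (i div P)))"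
    unfolding S_def by (simp add: algebra_simps sum_subtractf)
  also have "(\<Sum>i<2*P. ps (int (i div P))) = 0" by (rule ps_sum0[OF P0])
  also have "(\<Sum>i<2*P. ps (int (i div P)) * Fm (2*int P*int k + int i))
      = (\<Sum>l\<in>TS jn. w l * (\<Sum>i<2*P. ps (int (i div P)) * Hf jn (fst l) (snd l) (2*int P*int k + int i)))"
    unfolding Fm_def sum_distrib_left by (subst sum.swap) (simp add: algebra_simps)
  also have "\<dots> = (\<Sum>l\<in>TS jn. w l * (if l = (int j, int k) then c else 0))"
  proof (intro sum.cong refl)
    fix l assume l: "l \<in> TS jn"
    then obtain j' k' where l': "l = (j', k')" "-1 \<le> j'" "j' \<le> int jn" by (auto simp: TS_def)
    show "w l * (\<Sum>i<2*P. ps (int (i div P)) * Hf jn (fst l) (snd l) (2*int P*int k + int i))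
        = w l * (if l = (int j, int k) then c else 0)"
      using ortho[OF jk(1) l'(2,3), of k' "int k"] l' unfolding P_def c_def by simp
  qed
  also have "\<dots> = w (int j, int k) * c"
  proof -
    have "(int j, int k) \<in> TS jn"
    proof -
      have "(2::nat)^j \<le> 2^jn" using jk by (simp add: power_increasing)
      then have "int k < 2^jn" using jk by (metis of_nat_less_iff of_nat_numeral of_nat_power order_less_le_trans)
      then show ?thesis using jk by (auto simp: TS_def)
    qed
    then show ?thesis by (simp add: if_distrib[of "\<lambda>x. w _ * x"] sum.delta TS_finite cong: if_cong)
  qed
  finally have Sv: "S = w (int j, int k) * c" by simp
  have "S^2 \<le> (\<Sum>i<2*P. (ps (int (i div P)))^2) * (\<Sum>i<2*P. (Fm (2*int P*int k + int i) - 1)^2)"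
    unfolding S_def by (rule Cauchy_Schwarz_ineq_sum)
  also have "(\<Sum>i<2*P. (ps (int (i div P)))^2) = 2 * real P" by (rule ps_sq_sum[OF P0])
  finally have "S^2 \<le> 2 * real P * (\<Sum>i<2*P. (Fm (2*int P*int k + int i) - 1)^2)" .
  moreover have "S^2 = 2 * real P * (2 * real P * 2^j * (w (int j, int k))^2)"
  proof -
    have "(2 powr (real j / 2))^2 = 2^j"
      by (simp add: powr_realpow[symmetric] powr_powr[symmetric] power2_eq_square powr_add[symmetric])
    then show ?thesis unfolding Sv c_def by (simp add: power2_eq_square algebra_simps)
  qed
  ultimately show ?thesis using P0 by (simp add: mult_le_cancel_left_pos)
qed

lemma det_main:
  fixes w :: "int \<times> int \<Rightarrow> real" and j jn :: nat
  assumes jj: "j \<le> jn"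
  shows "ennreal (\<Sum>k<2^j. (w (int j, int k))^2)
     \<le> (\<integral>\<^sup>+x. ennreal ((infsum (\<lambda>l. w l * haar l x) (GamS jn) - indicator {0..1} x)^2) \<partial>lborel)"
proof -
  define N :: nat where "N = 2^(Suc jn)"
  define P :: nat where "P = 2^(jn - j)"
  have N0: "(0::real) < real N" by (simp add: N_def)
  define Fm where "Fm = (\<lambda>m. \<Sum>l\<in>TS jn. w l * Hf jn (fst l) (snd l) m)"
  define G where "G = (\<lambda>m. Fm m - 1)"
  define cell where "cell = (\<lambda>m::nat. {real m / real N <..< (real m + 1) / real N})"
  define f where "f = (\<lambda>x. (infsum (\<lambda>l. w l * haar l x) (GamS jn) - indicator {0..1} x)^2)"
  have cellE: "real m < x * real N \<and> x * real N < real m + 1" if "x \<in> cell m" for x m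
    using that N0 by (auto simp: cell_def field_simps)
  have cell_uniq: "m = m'" if "x \<in> cell m" "x \<in> cell m'" for x m m'
  proof -
    have "\<lfloor>x * real N\<rfloor> = int m" using cellE[OF that(1)] by (intro floor_unique) auto
    moreover have "\<lfloor>x * real N\<rfloor> = int m'" using cellE[OF that(2)] by (intro floor_unique) auto
    ultimately show ?thesis by simp
  qed
  have fcell: "f x = (G (int m))^2" if "x \<in> cell m" "m < N" for x m
  proof -
    have c: "real m < x * real N" "x * real N < real m + 1" using cellE[OF that(1)] by auto
    have NN: "real N = 2^(Suc jn)" by (simp add: N_def)
    have v: "infsum (\<lambda>l. w l * haar l x) (GamS jn) = Fm (int m)"
      unfolding Fm_def
    proof (rule cell_value)
      have "int m < int (2^(Suc jn))" using that(2) unfolding N_def by (simp only: of_nat_less_iff)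
      then show "int m < 2^(Suc jn)" by simp
    qed (use c in \<open>auto simp: NN\<close>)
    have "0 < x" using c by (smt (verit) N0 of_nat_0_le_iff zero_less_mult_pos2)
    moreover have "x < 1"
    proof -
      have "real m + 1 \<le> real N" using that(2) by linarith
      then have "x * real N < 1 * real N" using c by linarith
      then show ?thesis using N0 by (simp only: mult_less_cancel_right_pos)
    qed
    ultimately have "indicator {0..1} x = (1::real)" by simp
    then show ?thesis unfolding f_def v G_def by simp
  qed
  have pw: "(\<Sum>m<N. ennreal ((G (int m))^2) * indicator (cell m) x) \<le> ennreal (f x)" for x
  proof (cases "\<exists>m<N. x \<in> cell m")
    case True
    then obtain m0 where m0: "m0 < N" "x \<in> cell m0" by auto
    have "(\<Sum>m<N. ennreal ((G (int m))^2) * indicator (cell m) x) = (\<Sum>m<N. if m = m0 then ennreal ((G (int m))^2) else 0)"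
      using m0 cell_uniq by (intro sum.cong refl) (auto simp: indicator_def)
    also have "\<dots> = ennreal ((G (int m0))^2)" using m0 by (simp add: sum.delta)
    also have "\<dots> = ennreal (f x)" using fcell[OF m0(2,1)] by simp
    finally show ?thesis by simp
  next
    case False
    then have "(\<Sum>m<N. ennreal ((G (int m))^2) * indicator (cell m) x) = 0"
      by (intro sum.neutral) (auto simp: indicator_def)
    then show ?thesis by simp
  qed
  have "(\<integral>\<^sup>+x. (\<Sum>m<N. ennreal ((G (int m))^2) * indicator (cell m) x) \<partial>lborel)
      = (\<Sum>m<N. \<integral>\<^sup>+x. ennreal ((G (int m))^2) * indicator (cell m) x \<partial>lborel)"
    by (rule nn_integral_sum) (auto simp: cell_def)
  also have "\<dots> = (\<Sum>m<N. ennreal ((G (int m))^2 / real N))"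
  proof (intro sum.cong refl)
    fix m
    have "emeasure lborel (cell m) = ennreal (1 / real N)"
      unfolding cell_def using N0 by (simp add: field_simps diff_divide_distrib[symmetric])
    then show "(\<integral>\<^sup>+x. ennreal ((G (int m))^2) * indicator (cell m) x \<partial>lborel) = ennreal ((G (int m))^2 / real N)"
      by (subst nn_integral_cmult_indicator) (auto simp: cell_def ennreal_mult[symmetric] N0)
  qed
  also have "\<dots> = ennreal (\<Sum>m<N. (G (int m))^2 / real N)"
    by (rule sum_ennreal) (simp add: N0)
  finally have I1: "(\<integral>\<^sup>+x. (\<Sum>m<N. ennreal ((G (int m))^2) * indicator (cell m) x) \<partial>lborel)
      = ennreal (\<Sum>m<N. (G (int m))^2 / real N)" .
  have NP: "N = 2^j * (2*P)"
  proof -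
    have "Suc jn = j + Suc (jn - j)" using jj by simp
    then show ?thesis unfolding N_def P_def by (simp only: power_add power_Suc)
  qed
  have "(\<Sum>m<N. (G (int m))^2) = (\<Sum>k<2^j. \<Sum>i<2*P. (G (int (k*(2*P) + i)))^2)"
    unfolding NP by (rule sum_blocks)
  also have "\<dots> \<ge> (\<Sum>k<2^j. 2 * real P * 2^j * (w (int j, int k))^2)"
  proof (intro sum_mono)
    fix k assume "k \<in> {..<(2::nat)^j}"
    then have k: "k < 2^j" by simp
    have e: "int (k*(2*2^(jn-j)) + i) = 2*int (2^(jn-j))*int k + int i" for i by simp
    show "2 * real P * 2^j * (w (int j, int k))^2 \<le> (\<Sum>i<2*P. (G (int (k*(2*P) + i)))^2)"
      using block_bound[OF jj k, of w] unfolding G_def Fm_def P_def by (simp only: e)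
  qed
  finally have "(\<Sum>k<2^j. 2 * real P * 2^j * (w (int j, int k))^2) \<le> (\<Sum>m<N. (G (int m))^2)" .
  moreover have "(\<Sum>k<2^j. 2 * real P * 2^j * (w (int j, int k))^2) = real N * (\<Sum>k<2^j. (w (int j, int k))^2)"
    unfolding NP by (simp add: sum_distrib_left algebra_simps)
  ultimately have "(\<Sum>k<2^j. (w (int j, int k))^2) \<le> (\<Sum>m<N. (G (int m))^2) / real N"
    using N0 by (simp add: field_simps)
  also have "\<dots> = (\<Sum>m<N. (G (int m))^2 / real N)" by (simp add: sum_divide_distrib)
  finally have "ennreal (\<Sum>k<2^j. (w (int j, int k))^2) \<le> ennreal (\<Sum>m<N. (G (int m))^2 / real N)"
    by (rule ennreal_leI)
  also have "\<dots> = (\<integral>\<^sup>+x. (\<Sum>m<N. ennreal ((G (int m))^2) * indicator (cell m) x) \<partial>lborel)"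
    using I1 by simp
  also have "\<dots> \<le> (\<integral>\<^sup>+x. ennreal (f x) \<partial>lborel)"
    by (rule nn_integral_mono) (rule pw)
  finally show ?thesis unfolding f_def .
qed



lemma j0_props:
  fixes n :: real assumes "1 \<le> n"
  shows "j0 n = \<lfloor>log 2 n\<rfloor>" "2 powr (real_of_int (j0 n)) \<le> n" "n < 2 powr (real_of_int (j0 n) + 1)" "0 \<le> j0 n"
proof -
  define jj where "jj = \<lfloor>log 2 n\<rfloor>"
  have n0: "0 < n" using assms by simp
  have P: "2 powr (real_of_int jj) \<le> n \<and> n < 2 powr (real_of_int jj + 1)"
  proof
    have "2 powr (real_of_int jj) \<le> 2 powr (log 2 n)" unfolding jj_def by (intro powr_mono) auto
    then show "2 powr (real_of_int jj) \<le> n" using n0 by simp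
    have "log 2 n < real_of_int jj + 1" unfolding jj_def by linarith
    then have "2 powr (log 2 n) < 2 powr (real_of_int jj + 1)" by (intro powr_less_mono) auto
    then show "n < 2 powr (real_of_int jj + 1)" using n0 by simp
  qed
  have U: "j = jj" if "2 powr (real_of_int j) \<le> n \<and> n < 2 powr (real_of_int j + 1)" for j
  proof -
    have "log 2 (2 powr (real_of_int j)) \<le> log 2 n" using that n0 by (intro log_le_cancel_iff[THEN iffD2]) auto
    then have a: "real_of_int j \<le> log 2 n" by simp
    have "log 2 n < log 2 (2 powr (real_of_int j + 1))" using that n0 by (intro log_less_cancel_iff[THEN iffD2]) auto
    then have b: "log 2 n < real_of_int j + 1" by simp
    show ?thesis unfolding jj_def using a b by (intro floor_unique[symmetric]) auto
  qed
  have jq: "j0 n = jj" unfolding j0_def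
    using P U by (intro the_equality) blast+
  show "j0 n = \<lfloor>log 2 n\<rfloor>" unfolding jq jj_def ..
  show "2 powr (real_of_int (j0 n)) \<le> n" "n < 2 powr (real_of_int (j0 n) + 1)"
    unfolding jq using P by blast+
  have "0 \<le> log 2 n" using assms by simp
  then show "0 \<le> j0 n" unfolding jq jj_def by simp
qed

lemma Gamma_n_eq:
  assumes "1 \<le> n" shows "Gamma_n n = GamS (nat (j0 n))"
  using j0_props(4)[OF assms] by (auto simp: Gamma_n_def GamS_def Lambda_def)

lemma f_tilde_eq:
  "f_tilde_H n gamma N x = infsum (\<lambda>l. (if \<bar>beta_hat n N l\<bar> \<ge> eta gamma n N l then beta_hat n N l else 0) * haar l x) (Gamma_n n)"
  by (simp add: f_tilde_H_def)

definition Lc :: "nat \<Rightarrow> int \<Rightarrow> real set" where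
  "Lc j k = {x. 0 \<le> 2^j * x - k \<and> 2^j * x - k \<le> 1/2}"
definition Rc :: "nat \<Rightarrow> int \<Rightarrow> real set" where
  "Rc j k = {x. 1/2 < 2^j * x - k \<and> 2^j * x - k \<le> 1}"

lemma haar_LR:
  "haar (int j, k) x = 2 powr (real j / 2) * (indicator (Lc j k) x - indicator (Rc j k) x)"
  by (simp add: haar_def haar_psi_def Lc_def Rc_def indicator_def powr_realpow)

lemma haar_LR_sq:
  "(haar (int j, k) x)^2 = 2^j * (indicator (Lc j k) x + indicator (Rc j k) x)"
proof -
  have "(2 powr (real j / 2))^2 = 2^j"
    by (simp add: powr_realpow[symmetric] powr_powr[symmetric] power2_eq_square powr_add[symmetric])
  moreover have "Lc j k \<inter> Rc j k = {}" by (auto simp: Lc_def Rc_def)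
  ultimately show ?thesis unfolding haar_LR
    by (auto simp: indicator_def power_mult_distrib power2_eq_square)
qed

lemma sum_mset_indicator:
  "(\<Sum>T\<in>#N. (indicator A T :: real)) = real (count_in A N)"
  by (induction N) (auto simp: count_in_def indicator_def)

lemma sum_mset_haar:
  "(\<Sum>T\<in>#N. haar (int j, k) T) = 2 powr (real j / 2) * (real (count_in (Lc j k) N) - real (count_in (Rc j k) N))"
  by (induction N) (auto simp: count_in_def haar_LR indicator_def algebra_simps)

lemma sum_mset_haar_sq:
  "(\<Sum>T\<in>#N. (haar (int j, k) T)^2) = 2^j * (real (count_in (Lc j k) N) + real (count_in (Rc j k) N))"
  by (induction N) (auto simp: count_in_def haar_LR_sq indicator_def algebra_simps)

lemma beta_hat_LR:
  "beta_hat n N (int j, k) = 2 powr (real j / 2) * (real (count_in (Lc j k) N) - real (count_in (Rc j k) N)) / n"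
  unfolding beta_hat_def sum_mset_haar by simp

lemma V_hat_LR:
  "V_hat n N (int j, k) = 2^j * (real (count_in (Lc j k) N) + real (count_in (Rc j k) N)) / n^2"
  unfolding V_hat_def sum_mset_haar_sq by simp

lemma sup_norm_haar:
  "0 \<le> sup_norm (haar (int j, k))" "sup_norm (haar (int j, k)) \<le> 2 powr (real j / 2)"
proof -
  have b: "\<bar>haar (int j, k) x\<bar> \<le> 2 powr (real j / 2)" for x
    unfolding haar_LR by (auto simp: indicator_def abs_mult)
  then have bdd: "bdd_above (range (\<lambda>x. \<bar>haar (int j, k) x\<bar>))" by (intro bdd_aboveI2) blast
  show "sup_norm (haar (int j, k)) \<le> 2 powr (real j / 2)"
    unfolding sup_norm_def by (rule cSUP_least) (use b in auto)
  have "\<bar>haar (int j, k) 0\<bar> \<le> sup_norm (haar (int j, k))"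
    unfolding sup_norm_def by (rule cSUP_upper[OF _ bdd]) auto
  then show "0 \<le> sup_norm (haar (int j, k))" by linarith
qed

lemma kept:
  fixes n gamma :: real and N :: "real multiset" and j :: nat and k :: int
  assumes n1: "1 \<le> n" and g: "0 < gamma"
  defines "cL \<equiv> real (count_in (Lc j k) N)" and "cR \<equiv> real (count_in (Rc j k) N)"
  defines "L \<equiv> ln n"
  assumes D: "cL - cR \<ge> sqrt (2*gamma*L*((cL + cR) + sqrt (2*gamma*L*(cL + cR)) + 3*gamma*L)) + gamma*L/3"
  shows "\<bar>beta_hat n N (int j, k)\<bar> \<ge> eta gamma n N (int j, k)"
proof -
  define a where "a = 2 powr (real j / 2)"
  define S where "S = sup_norm (haar (int j, k))"
  define sm where "sm = cL + cR"
  define X where "X = sm + sqrt (2*gamma*L* sm) + 3*gamma*L"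
  have a0: "0 < a" by (simp add: a_def)
  have a2: "2^j = a^2"
    unfolding a_def by (simp add: powr_realpow[symmetric] powr_powr[symmetric] power2_eq_square powr_add[symmetric])
  have S0: "0 \<le> S" "S \<le> a" using sup_norm_haar unfolding S_def a_def by auto
  have L0: "0 \<le> L" using n1 by (simp add: L_def)
  have s0: "0 \<le> sm" by (simp add: sm_def cL_def cR_def)
  have n0: "0 < n" using n1 by simp
  have Vh: "V_hat n N (int j, k) = a^2 * sm / n^2" unfolding V_hat_LR sm_def cL_def cR_def a2 by simp
  have Vh0: "0 \<le> V_hat n N (int j, k)" unfolding Vh using s0 by simp
  have t1: "sqrt (2 * gamma * ln n * V_hat n N (int j, k) * S^2 / n^2) \<le> a^2/n^2 * sqrt (2*gamma*L* sm)"
  proof -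
    have "2 * gamma * ln n * V_hat n N (int j, k) * S^2 / n^2 \<le> 2 * gamma * L * (a^2 * sm / n^2) * a^2 / n^2"
      unfolding Vh L_def using S0 g L0 s0 n0
      by (intro divide_right_mono mult_left_mono power_mono) (auto simp: L_def)
    also have "\<dots> = (a^2/n^2)^2 * (2*gamma*L* sm)" by (simp add: power2_eq_square field_simps)
    finally have "sqrt (2 * gamma * ln n * V_hat n N (int j, k) * S^2 / n^2) \<le> sqrt ((a^2/n^2)^2 * (2*gamma*L* sm))"
      by (rule real_sqrt_le_mono)
    also have "\<dots> = a^2/n^2 * sqrt (2*gamma*L* sm)" by (simp add: real_sqrt_mult)
    finally show ?thesis .
  qed
  have t2: "3 * gamma * ln n * S^2 / n^2 \<le> 3 * gamma * L * a^2 / n^2"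
    unfolding L_def using S0 g L0 n0 by (intro divide_right_mono mult_left_mono power_mono) (auto simp: L_def)
  have Vt: "V_tilde gamma n N (int j, k) \<le> a^2/n^2 * X"
  proof -
    have "V_tilde gamma n N (int j, k) \<le> a^2 * sm / n^2 + a^2/n^2 * sqrt (2*gamma*L* sm) + 3 * gamma * L * a^2 / n^2"
      unfolding V_tilde_def S_def[symmetric] Vh[symmetric] using t1 t2 by linarith
    also have "\<dots> = a^2/n^2 * X" unfolding X_def by (simp add: ring_distribs)
    finally show ?thesis .
  qed
  have "eta gamma n N (int j, k) \<le> sqrt (2*gamma*(a^2/n^2 * X)*L) + gamma * L / (3*n) * a"
  proof -
    have "sqrt (2 * gamma * V_tilde gamma n N (int j, k) * ln n) \<le> sqrt (2*gamma*(a^2/n^2 * X)*L)"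
      unfolding L_def using Vt g L0 by (intro real_sqrt_le_mono mult_right_mono mult_left_mono) (auto simp: L_def)
    moreover have "gamma * ln n / (3 * n) * S \<le> gamma * L / (3*n) * a"
      using S0 g L0 n0 unfolding L_def by (intro mult_left_mono) (auto simp: L_def)
    ultimately show ?thesis unfolding eta_def S_def by linarith
  qed
  also have "\<dots> = a/n * (sqrt (2*gamma*L*X) + gamma*L/3)"
  proof -
    have "sqrt (2*gamma*(a^2/n^2 * X)*L) = sqrt ((a/n)^2 * (2*gamma*L*X))" by (simp add: power_divide algebra_simps)
    also have "\<dots> = a/n * sqrt (2*gamma*L*X)" using a0 n0 by (simp add: real_sqrt_mult)
    finally show ?thesis using n0 by (simp add: field_simps)
  qed
  also have "\<dots> \<le> a/n * (cL - cR)"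
    using D a0 n0 unfolding X_def sm_def by (intro mult_left_mono) auto
  also have "\<dots> = \<bar>beta_hat n N (int j, k)\<bar>"
  proof -
    have "0 \<le> gamma*L/3" using g L0 by simp
    moreover have "0 \<le> sqrt (2*gamma*L*((cL + cR) + sqrt (2*gamma*L*(cL + cR)) + 3*gamma*L))"
      using g L0 s0 unfolding sm_def by (intro real_sqrt_ge_zero mult_nonneg_nonneg add_nonneg_nonneg) (auto simp: cL_def cR_def)
    ultimately have "0 \<le> cL - cR" using D by linarith
    then show ?thesis unfolding beta_hat_LR using a0 n0 by (simp add: a_def cL_def cR_def abs_mult)
  qed
  finally show ?thesis .
qed



lemma Lc_eq: "Lc j k = {real_of_int k / 2^j .. (real_of_int k + 1/2) / 2^j}"
  by (auto simp: Lc_def field_simps)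
lemma Rc_eq: "Rc j k = {(real_of_int k + 1/2) / 2^j <.. (real_of_int k + 1) / 2^j}"
  by (auto simp: Rc_def field_simps)

lemma Lc_sets[measurable]: "Lc j k \<in> sets borel" unfolding Lc_eq by simp
lemma Rc_sets[measurable]: "Rc j k \<in> sets borel" unfolding Rc_eq by simp

lemma LR_disj: "Lc j k \<inter> Rc j k = {}" by (auto simp: Lc_def Rc_def)

lemma mean_sub01:
  fixes A :: "real set" and n :: real
  assumes "A \<in> sets borel" "A \<subseteq> {0..1}"
  shows "set_lebesgue_integral lborel A (\<lambda>x. n * indicator {0..1} x) = n * measure lborel A"
proof -
  have "set_lebesgue_integral lborel A (\<lambda>x. n * indicator {0..1} x) = set_lebesgue_integral lborel A (\<lambda>x. n)"
    using assms by (intro set_lebesgue_integral_cong) (auto simp: indicator_def)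
  also have "\<dots> = measure lborel A *\<^sub>R n"
  proof (rule set_integral_const)
    show "A \<in> sets lborel" using assms by simp
    have "emeasure lborel A \<le> emeasure lborel {0..1::real}" using assms by (intro emeasure_mono) auto
    then show "emeasure lborel A \<noteq> \<infinity>" by (auto simp: top_unique)
  qed
  finally show ?thesis by simp
qed

lemma LR_sub01:
  assumes "k < 2^j"
  shows "Lc j (int k) \<subseteq> {0..1}" "Rc j (int k) \<subseteq> {0..1}"
proof -
  have "real k + 1 \<le> 2^j"
  proof -
    have "k + 1 \<le> 2^j" using assms by simp
    then have "real (k+1) \<le> real (2^j)" by (simp only: of_nat_le_iff)
    then show ?thesis by simp
  qed
  then have kk: "real k * 1 + 1 \<le> 1 * 2^j" by simp
  have p: "(0::real) < 2^j" by simp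
  show "Lc j (int k) \<subseteq> {0..1}"
  proof
    fix x assume "x \<in> Lc j (int k)"
    then have h: "0 \<le> 2^j * x - real k" "2^j * x - real k \<le> 1/2" by (auto simp: Lc_def)
    have "0 \<le> 2^j * x" using h(1) by linarith
    then have "0 \<le> x" using p by (simp add: zero_le_mult_iff)
    moreover have "2^j * x \<le> 2^j * 1" using h(2) kk by linarith
    then have "x \<le> 1" using p by simp
    ultimately show "x \<in> {0..1}" by simp
  qed
  show "Rc j (int k) \<subseteq> {0..1}"
  proof
    fix x assume "x \<in> Rc j (int k)"
    then have h: "1/2 < 2^j * x - real k" "2^j * x - real k \<le> 1" by (auto simp: Rc_def)
    have "0 \<le> 2^j * x" using h(1) by linarith
    then have "0 \<le> x" using p by (simp add: zero_le_mult_iff)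
    moreover have "2^j * x \<le> 2^j * 1" using h(2) kk by linarith
    then have "x \<le> 1" using p by simp
    ultimately show "x \<in> {0..1}" by simp
  qed
qed

lemma LR_meas:
  assumes "k < 2^j"
  shows "measure lborel (Lc j (int k)) = 1 / 2^(Suc j)" "measure lborel (Rc j (int k)) = 1 / 2^(Suc j)"
  unfolding Lc_eq Rc_eq by (simp_all add: field_simps)

lemma poisson_event:
  fixes M :: "'w measure" and N n j k a b
  assumes pp: "poisson_process M N (\<lambda>x. real n * indicator {0..1} x)" and k: "k < 2^j"
  defines "mu \<equiv> real n / 2^(Suc j)"
  defines "E \<equiv> {\<omega> \<in> space M. count_in (Lc j (int k)) (N \<omega>) = a \<and> count_in (Rc j (int k)) (N \<omega>) = b}"
  shows "E \<in> sets M" "measure M E = (mu^a / fact a * exp (- mu)) * (mu^b / fact b * exp (- mu))"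
proof -
  have ps: "prob_space M" using pp by (simp add: poisson_process_def)
  interpret prob_space M by (rule ps)
  define A :: "nat \<Rightarrow> real set" where "A = (\<lambda>i. if i = 0 then Lc j (int k) else Rc j (int k))"
  define X where "X = (\<lambda>i \<omega>. count_in (A i) (N \<omega>))"
  have Ab: "A i \<in> sets borel" for i by (simp add: A_def)
  have Xm: "X i \<in> measurable M (count_space UNIV)" for i
    using pp Ab by (auto simp: poisson_process_def X_def)
  have dist: "measure M {\<omega> \<in> space M. X i \<omega> = c} = mu^c / fact c * exp (- mu)" if "i \<in> {0,1}" for i c
  proof -
    have "set_lebesgue_integral lborel (A i) (\<lambda>x. real n * indicator {0..1} x) = mu"
    proof -
      have s1: "A i \<subseteq> {0..1}" using LR_sub01[OF k] by (auto simp: A_def)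
      have s2: "measure lborel (A i) = 1 / 2^(Suc j)" using LR_meas[OF k] by (auto simp: A_def)
      show ?thesis unfolding mean_sub01[OF Ab s1] s2 mu_def by simp
    qed
    then show ?thesis using pp Ab by (auto simp: poisson_process_def X_def)
  qed
  have ind: "indep_vars (\<lambda>_. count_space UNIV) X {0,1}"
  proof -
    have "disjoint_family_on A {0,1}" using LR_disj by (auto simp: disjoint_family_on_def A_def)
    then show ?thesis using pp Ab unfolding X_def poisson_process_def by auto
  qed
  define B :: "nat \<Rightarrow> nat set" where "B = (\<lambda>i. if i = 0 then {a} else {b})"
  have EE: "E = (\<Inter>i\<in>{0,1}. X i -` B i \<inter> space M)"
    by (auto simp: E_def X_def A_def B_def)
  have sE: "X i -` B i \<inter> space M \<in> sets M" for i using Xm[of i] by (simp add: measurable_sets)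
  show "E \<in> sets M" unfolding EE using sE by auto
  have "measure M E = (\<Prod>i\<in>{0,1}. prob (X i -` B i \<inter> space M))"
    unfolding EE by (rule indep_varsD[OF ind]) auto
  also have "\<dots> = prob (X 0 -` {a} \<inter> space M) * prob (X 1 -` {b} \<inter> space M)" by (simp add: B_def)
  also have "X 0 -` {a} \<inter> space M = {\<omega> \<in> space M. X 0 \<omega> = a}" by auto
  also have "X 1 -` {b} \<inter> space M = {\<omega> \<in> space M. X 1 \<omega> = b}" by auto
  finally show "measure M E = (mu^a / fact a * exp (- mu)) * (mu^b / fact b * exp (- mu))"
    using dist[of 0 a] dist[of 1 b] by simp
qed



definition Ffun :: "real \<Rightarrow> real \<Rightarrow> real" where
  "Ffun g u = sqrt (2*g*(2 + u + sqrt (2*g*u*(2+u)) + 3*g*u)) + g * sqrt u / 3"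

definition Gfun :: "real \<Rightarrow> real \<Rightarrow> real" where
  "Gfun g1 u = (sqrt g1 + sqrt u)^2/2 + (sqrt g1 + sqrt u)^2/(2*(1 - sqrt u * (sqrt g1 + sqrt u)))"

lemma count_choice:
  fixes g g1 g2 L mu u :: real
  assumes g: "0 < g" and g1: "0 < g1" and L: "1 \<le> L" and mu: "2 \<le> mu" and u: "u = L / mu"
    and F: "Ffun g u \<le> 2 * sqrt g1" and H: "sqrt u * (sqrt g1 + sqrt u) \<le> 1/2" and G: "Gfun g1 u \<le> g2"
  shows "\<exists>aL aR :: nat. 1 \<le> aL \<and> 1 \<le> aR \<and> 1 \<le> real aL - real aR \<and> real aL \<le> 2*mu \<and> real aR \<le> mu \<and>
     real aL - real aR \<ge> sqrt (2*g*L*((real aL + real aR) + sqrt (2*g*L*(real aL + real aR)) + 3*g*L)) + g*L/3 \<and>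
     phiKL mu (real aL) + phiKL mu (real aR) \<le> g2 * L"
proof -
  define su where "su = sqrt u"
  define w where "w = sqrt g1 + su"
  define r where "r = mu * su"
  define d where "d = sqrt g1 * r"
  have mu0: "0 < mu" using mu by simp
  have u0: "0 < u" using L mu0 by (simp add: u)
  have Lu: "L = mu * u" using mu0 by (simp add: u)
  have su0: "0 < su" using u0 by (simp add: su_def)
  have su2: "su^2 = u" using u0 by (simp add: su_def)
  have r0: "0 < r" using mu0 su0 by (simp add: r_def)
  have d0: "0 < d" using g1 r0 by (simp add: d_def)
  have rsu: "r * su = L" using su2 Lu by (simp add: r_def power2_eq_square algebra_simps)
  have w0: "0 < w" using su0 g1 by (simp add: w_def add_pos_pos)
  have H': "su * w \<le> 1/2" using H by (simp add: su_def w_def)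
  have rw: "r * w = d + L" using rsu by (simp add: w_def d_def algebra_simps)
  have d1: "d + 1 \<le> r * w" using rw L by simp
  have rwmu: "r * w = mu * (su * w)" by (simp add: r_def)
  have lowR: "mu - d - 1 \<ge> mu * (1 - su * w)" using d1 rwmu by (simp add: algebra_simps)
  have hm: "mu * (su * w) \<le> mu * (1/2)" using H' mu0 by (intro mult_left_mono) auto
  have half: "mu * (1 - su * w) \<ge> mu / 2" using hm by (simp add: right_diff_distrib)
  define aL :: nat where "aL = nat \<lceil>mu + d\<rceil>"
  define aR :: nat where "aR = nat \<lfloor>mu - d\<rfloor>"
  have AL: "mu + d \<le> real aL" "real aL < mu + d + 1"
    using mu0 d0 unfolding aL_def by (auto simp: of_nat_nat) (linarith+)
  have AR: "mu - d - 1 < real aR" "real aR \<le> mu - d"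
  proof -
    have "0 \<le> mu - d" using lowR half mu by linarith
    then show "mu - d - 1 < real aR" "real aR \<le> mu - d" unfolding aR_def by (auto simp: of_nat_nat)
  qed
  have ARpos: "mu * (1 - su * w) < real aR" using AR lowR by linarith
  have "1 \<le> real aR" using ARpos half mu by linarith
  then have aR1: "1 \<le> aR" by (metis of_nat_1 of_nat_le_iff)
  have "1 \<le> real aL" using AL mu d0 by linarith
  then have aL1: "1 \<le> aL" by (metis of_nat_1 of_nat_le_iff)
  have gt: "real aR < real aL" using AL AR d0 by linarith
  then have "aR < aL" by simp
  then have "aR + 1 \<le> aL" by simp
  then have "real aR + 1 \<le> real aL" by (metis of_nat_1 of_nat_add of_nat_le_iff)
  then have Dge1: "1 \<le> real aL - real aR" by linarith
  have ALle: "real aL \<le> 2*mu"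
  proof -
    have "real aL \<le> mu + r * w" using AL d1 by linarith
    also have "\<dots> = mu * (1 + su * w)" using rwmu by (simp add: algebra_simps)
    also have "\<dots> \<le> 2 * mu" using hm mu0 unfolding distrib_left by linarith
    finally show ?thesis .
  qed
  have ARle: "real aR \<le> mu" using AR d0 by linarith
  have D2d: "2 * d \<le> real aL - real aR" using AL AR by linarith
  define sm where "sm = real aL + real aR"
  have sm0: "0 \<le> sm" by (simp add: sm_def)
  have smle: "sm \<le> mu * (2 + u)" using AL AR L Lu unfolding sm_def by (simp add: algebra_simps)
  have thr: "sqrt (2*g*L*(sm + sqrt (2*g*L * sm) + 3*g*L)) + g*L/3 \<le> real aL - real aR"
  proof -
    have m1: "sqrt (2*g*L * sm) \<le> sqrt (2*g*L*(mu*(2+u)))"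
      using smle g L by (intro real_sqrt_le_mono mult_left_mono) auto
    have "sqrt (2*g*L*(sm + sqrt (2*g*L * sm) + 3*g*L)) \<le> sqrt (2*g*L*(mu*(2+u) + sqrt (2*g*L*(mu*(2+u))) + 3*g*L))"
      using smle m1 g L by (intro real_sqrt_le_mono mult_left_mono add_mono) auto
    also have "\<dots> = r * sqrt (2*g*(2 + u + sqrt (2*g*u*(2+u)) + 3*g*u))"
    proof -
      have i1: "sqrt (2*g*L*(mu*(2+u))) = mu * sqrt (2*g*u*(2+u))"
      proof -
        have e1: "2*g*L*(mu*(2+u)) = mu^2 * (2*g*u*(2+u))" by (simp add: Lu power2_eq_square algebra_simps)
        have "sqrt (2*g*L*(mu*(2+u))) = sqrt (mu^2) * sqrt (2*g*u*(2+u))" unfolding e1 by (rule real_sqrt_mult)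
        also have "sqrt (mu^2) = mu" using mu0 by simp
        finally show ?thesis .
      qed
      have "2*g*L*(mu*(2+u) + sqrt (2*g*L*(mu*(2+u))) + 3*g*L) = r^2 * (2*g*(2 + u + sqrt (2*g*u*(2+u)) + 3*g*u))"
        unfolding i1 r_def using su2 by (simp add: Lu power_mult_distrib power2_eq_square algebra_simps)
      then have "sqrt (2*g*L*(mu*(2+u) + sqrt (2*g*L*(mu*(2+u))) + 3*g*L)) = sqrt (r^2) * sqrt (2*g*(2 + u + sqrt (2*g*u*(2+u)) + 3*g*u))"
        by (simp only: real_sqrt_mult)
      also have "sqrt (r^2) = r" using r0 by simp
      finally show ?thesis .
    qed
    finally have "sqrt (2*g*L*(sm + sqrt (2*g*L * sm) + 3*g*L)) + g*L/3 \<le> r * sqrt (2*g*(2 + u + sqrt (2*g*u*(2+u)) + 3*g*u)) + r * (g * su / 3)"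
      using rsu by (simp add: algebra_simps)
    also have "\<dots> = r * Ffun g u" by (simp add: Ffun_def su_def algebra_simps)
    also have "\<dots> \<le> r * (2 * sqrt g1)" using F r0 by (intro mult_left_mono) auto
    also have "\<dots> = 2 * d" by (simp add: d_def)
    finally show ?thesis using D2d by linarith
  qed
  have phi: "phiKL mu (real aL) + phiKL mu (real aR) \<le> g2 * L"
  proof -
    have dd: "(d+1)^2 \<le> mu^2 * u * w^2"
    proof -
      have "(d+1)^2 \<le> (r*w)^2" using d1 d0 by (intro power_mono) auto
      also have "(r*w)^2 = mu^2 * u * w^2" using su2 by (simp add: r_def power_mult_distrib)
      finally show ?thesis .
    qed
    have p1: "phiKL mu (real aL) \<le> mu * u * (w^2/2)"
    proof -
      have "phiKL mu (real aL) \<le> (real aL - mu)^2 / (2*mu)" using AL d0 mu0 by (intro phiKL_above) auto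
      also have "\<dots> \<le> (d+1)^2 / (2*mu)" using AL d0 mu0 by (intro divide_right_mono power_mono) auto
      also have "\<dots> \<le> mu^2 * u * w^2 / (2*mu)" using dd mu0 by (intro divide_right_mono) auto
      also have "\<dots> = mu * u * (w^2/2)" using mu0 by (simp add: power2_eq_square)
      finally show ?thesis .
    qed
    have p2: "phiKL mu (real aR) \<le> mu * u * (w^2/(2*(1 - su*w)))"
    proof -
      have pos: "0 < 1 - su*w" using H' by simp
      have "phiKL mu (real aR) \<le> (mu - real aR)^2 / (2*real aR)"
        using aR1 ARle by (intro phiKL_below) auto
      also have "\<dots> \<le> (d+1)^2 / (2*(mu * (1 - su*w)))"
      proof (rule frac_le)
        show "0 \<le> (d+1)^2" by simp
        show "(mu - real aR)^2 \<le> (d+1)^2" using AR ARle d0 by (intro power_mono) auto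
        show "0 < 2*(mu * (1 - su*w))" using pos mu0 by simp
        show "2*(mu * (1 - su*w)) \<le> 2*real aR" using ARpos by simp
      qed
      also have "\<dots> \<le> mu^2 * u * w^2 / (2*(mu * (1 - su*w)))" using dd mu0 pos by (intro divide_right_mono) auto
      also have "\<dots> = mu * u * (w^2/(2*(1 - su*w)))" using mu0 pos by (simp add: power2_eq_square field_simps)
      finally show ?thesis .
    qed
    have "phiKL mu (real aL) + phiKL mu (real aR) \<le> mu * u * Gfun g1 u"
      using p1 p2 by (simp add: Gfun_def w_def su_def algebra_simps)
    also have "\<dots> \<le> mu * u * g2" using G mu0 u0 by (intro mult_left_mono) auto
    finally show ?thesis by (simp add: Lu algebra_simps)
  qed
  show ?thesis
    using aL1 aR1 Dge1 ALle ARle thr phi unfolding sm_def by blast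
qed

lemma u0_exists:
  fixes g g1 g2 :: real
  assumes g: "0 < g" "g < g1" "g1 < g2"
  shows "\<exists>u0>0. \<forall>u. 0 < u \<and> u < u0 \<longrightarrow> Ffun g u \<le> 2* sqrt g1 \<and> sqrt u * (sqrt g1 + sqrt u) \<le> 1/2 \<and> Gfun g1 u \<le> g2"
proof -
  have t1: "((\<lambda>u. Ffun g u) \<longlongrightarrow> Ffun g 0) (at_right 0)"
    unfolding Ffun_def by (intro tendsto_intros; simp)
  have f0: "Ffun g 0 = 2 * sqrt g"
  proof -
    have "Ffun g 0 = sqrt (2^2 * g)" by (simp add: Ffun_def)
    also have "\<dots> = 2 * sqrt g" by (simp add: real_sqrt_mult)
    finally show ?thesis .
  qed
  have "2 * sqrt g < 2 * sqrt g1" using g by simp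
  then have e1: "eventually (\<lambda>u. Ffun g u < 2 * sqrt g1) (at_right 0)"
    using order_tendstoD(2)[OF t1] f0 by simp
  have t2: "((\<lambda>u. sqrt u * (sqrt g1 + sqrt u)) \<longlongrightarrow> sqrt 0 * (sqrt g1 + sqrt 0)) (at_right 0)"
    by (intro tendsto_intros)
  then have e2: "eventually (\<lambda>u. sqrt u * (sqrt g1 + sqrt u) < 1/2) (at_right 0)"
    using order_tendstoD(2)[OF t2, of "1/2"] by simp
  have t3: "((\<lambda>u. Gfun g1 u) \<longlongrightarrow> Gfun g1 0) (at_right 0)"
    unfolding Gfun_def by (intro tendsto_intros; simp)
  have "Gfun g1 0 = g1" using g by (simp add: Gfun_def)
  then have e3: "eventually (\<lambda>u. Gfun g1 u < g2) (at_right 0)"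
    using order_tendstoD(2)[OF t3] g by simp
  have "eventually (\<lambda>u. Ffun g u < 2 * sqrt g1 \<and> sqrt u * (sqrt g1 + sqrt u) < 1/2 \<and> Gfun g1 u < g2) (at_right 0)"
    using e1 e2 e3 by eventually_elim auto
  then obtain b where b: "b > 0" "\<And>y. y > 0 \<Longrightarrow> y < b \<Longrightarrow> Ffun g y < 2 * sqrt g1 \<and> sqrt y * (sqrt g1 + sqrt y) < 1/2 \<and> Gfun g1 y < g2"
    unfolding eventually_at_right_field by auto
  show ?thesis using b by (intro exI[of _ b]) force
qed



lemma expectation_bound:
  fixes M :: "'w measure" and N :: "'w \<Rightarrow> real multiset" and n jn j aL aR :: nat and gamma :: real
  assumes pp: "poisson_process M N (\<lambda>x. real n * indicator {0..1} x)"
    and n1: "1 \<le> real n" and g: "0 < gamma"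
    and jn: "j0 (real n) = int jn" and jj: "j \<le> jn"
    and D1: "1 \<le> real aL - real aR"
    and thr: "real aL - real aR \<ge> sqrt (2*gamma*ln (real n)*((real aL + real aR) + sqrt (2*gamma*ln (real n)*(real aL + real aR)) + 3*gamma*ln (real n))) + gamma*ln (real n)/3"
  defines "mu \<equiv> real n / 2^(Suc j)"
  shows "ennreal (2^j * (2^j / (real n)^2) * ((mu^aL / fact aL * exp (- mu)) * (mu^aR / fact aR * exp (- mu))))
    \<le> (\<integral>\<^sup>+\<omega>. (\<integral>\<^sup>+x. ennreal ((f_tilde_H (real n) gamma (N \<omega>) x - indicator {0..1} x)\<^sup>2) \<partial>lborel) \<partial>M)"
proof -
  have ps: "prob_space M" using pp by (simp add: poisson_process_def)
  interpret prob_space M by (rule ps)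
  define x where "x = real n"
  define p where "p = (mu^aL / fact aL * exp (- mu)) * (mu^aR / fact aR * exp (- mu))"
  define v where "v = 2^j / x^2"
  define E where "E = (\<lambda>k. {\<omega> \<in> space M. count_in (Lc j (int k)) (N \<omega>) = aL \<and> count_in (Rc j (int k)) (N \<omega>) = aR})"
  define W where "W = (\<lambda>\<omega> l. if \<bar>beta_hat x (N \<omega>) l\<bar> \<ge> eta gamma x (N \<omega>) l then beta_hat x (N \<omega>) l else 0)"
  have x1: "1 \<le> x" using n1 by (simp add: x_def)
  have Ek: "E k \<in> sets M" "measure M (E k) = p" if "k < 2^j" for k
    using poisson_event[OF pp that, of aL aR] unfolding E_def p_def mu_def by auto
  have v0: "0 \<le> v" by (simp add: v_def)
  have mu0: "0 \<le> mu" by (simp add: mu_def)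
  have p0: "0 \<le> p" unfolding p_def using mu0 by simp
  have inner: "ennreal (\<Sum>k<2^j. (W \<omega> (int j, int k))^2)
      \<le> (\<integral>\<^sup>+y. ennreal ((f_tilde_H x gamma (N \<omega>) y - indicator {0..1} y)\<^sup>2) \<partial>lborel)" for \<omega>
  proof -
    have "f_tilde_H x gamma (N \<omega>) y = infsum (\<lambda>l. W \<omega> l * haar l y) (GamS jn)" for y
      unfolding f_tilde_eq Gamma_n_eq[OF x1] W_def using jn by (simp add: x_def)
    then show ?thesis using det_main[OF jj, of "W \<omega>"] by simp
  qed
  have onE: "v * indicator (E k) \<omega> \<le> (W \<omega> (int j, int k))^2" for k \<omega>
  proof (cases "\<omega> \<in> E k")
    case True
    then have cL: "count_in (Lc j (int k)) (N \<omega>) = aL" and cR: "count_in (Rc j (int k)) (N \<omega>) = aR"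
      by (auto simp: E_def)
    have kp: "\<bar>beta_hat x (N \<omega>) (int j, int k)\<bar> \<ge> eta gamma x (N \<omega>) (int j, int k)"
      by (rule kept[OF x1 g]) (use thr in \<open>simp add: cL cR x_def\<close>)
    then have "W \<omega> (int j, int k) = beta_hat x (N \<omega>) (int j, int k)" by (simp add: W_def)
    also have "\<dots> = 2 powr (real j / 2) * (real aL - real aR) / x" by (simp add: beta_hat_LR cL cR)
    finally have "(W \<omega> (int j, int k))^2 = 2^j * (real aL - real aR)^2 / x^2"
      by (simp add: power_divide power_mult_distrib powr_realpow[symmetric] powr_powr[symmetric]
            power2_eq_square powr_add[symmetric])
    also have "\<dots> \<ge> 2^j * 1 / x^2"
      using D1 by (intro divide_right_mono mult_left_mono) (auto simp: one_le_power)
    finally show ?thesis using True by (simp add: v_def)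
  next
    case False then show ?thesis by simp
  qed
  have "(\<integral>\<^sup>+\<omega>. (\<Sum>k<2^j. ennreal v * indicator (E k) \<omega>) \<partial>M)
      = (\<Sum>k<2^j. \<integral>\<^sup>+\<omega>. ennreal v * indicator (E k) \<omega> \<partial>M)"
    by (rule nn_integral_sum) (use Ek in auto)
  also have "\<dots> = (\<Sum>k<(2::nat)^j. ennreal (v * p))"
  proof (intro sum.cong refl)
    fix k assume "k \<in> {..<(2::nat)^j}"
    then have k: "k < 2^j" by simp
    show "(\<integral>\<^sup>+\<omega>. ennreal v * indicator (E k) \<omega> \<partial>M) = ennreal (v * p)"
      using Ek[OF k] v0 p0 by (simp add: nn_integral_cmult_indicator emeasure_eq_measure ennreal_mult)
  qed
  also have "\<dots> = ennreal (2^j * (v * p))" using v0 p0 by (simp add: ennreal_of_nat_eq_real_of_nat ennreal_mult[symmetric])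
  finally have I1: "(\<integral>\<^sup>+\<omega>. (\<Sum>k<2^j. ennreal v * indicator (E k) \<omega>) \<partial>M) = ennreal (2^j * (v * p))" .
  have "(\<integral>\<^sup>+\<omega>. (\<Sum>k<2^j. ennreal v * indicator (E k) \<omega>) \<partial>M)
      \<le> (\<integral>\<^sup>+\<omega>. (\<integral>\<^sup>+y. ennreal ((f_tilde_H x gamma (N \<omega>) y - indicator {0..1} y)\<^sup>2) \<partial>lborel) \<partial>M)"
  proof (rule nn_integral_mono)
    fix \<omega>
    have "(\<Sum>k<(2::nat)^j. ennreal v * indicator (E k) \<omega>) = (\<Sum>k<(2::nat)^j. ennreal (v * indicator (E k) \<omega>))"
      by (intro sum.cong refl) (auto simp: indicator_def)
    also have "\<dots> = ennreal (\<Sum>k<(2::nat)^j. v * indicator (E k) \<omega>)"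
      by (rule sum_ennreal) (use v0 in auto)
    also have "\<dots> \<le> ennreal (\<Sum>k<(2::nat)^j. (W \<omega> (int j, int k))^2)"
      by (intro ennreal_leI sum_mono onE)
    also have "\<dots> \<le> (\<integral>\<^sup>+y. ennreal ((f_tilde_H x gamma (N \<omega>) y - indicator {0..1} y)\<^sup>2) \<partial>lborel)" by (rule inner)
    finally show "(\<Sum>k<(2::nat)^j. ennreal v * indicator (E k) \<omega>) \<le> (\<integral>\<^sup>+y. ennreal ((f_tilde_H x gamma (N \<omega>) y - indicator {0..1} y)\<^sup>2) \<partial>lborel)" .
  qed
  then show ?thesis unfolding I1 by (simp add: v_def p_def x_def algebra_simps)
qed



lemma powr_ge_from:
  fixes x b B :: real
  assumes "0 < b" "0 < B" "B powr (1/b) \<le> x"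
  shows "B \<le> x powr b"
proof -
  have "(B powr (1/b)) powr b \<le> x powr b" using assms by (intro powr_mono2) auto
  also have "(B powr (1/b)) powr b = B" using assms by (simp add: powr_powr)
  finally show ?thesis .
qed

lemma large_n:
  fixes eps u0 x :: real
  assumes e: "0 < eps" "eps < 1" and u0: "0 < u0"
    and x: "max (max 3 ((8/(eps*u0)) powr (2/eps))) (max (4 powr (1/eps)) (4 powr (1/(1-eps)))) \<le> x"
  shows "1 \<le> ln x" "4 \<le> x powr eps" "4 * x powr eps \<le> x" "2 * ln x / x powr eps < u0"
proof -
  have x3: "3 \<le> x" using x by simp
  have x0: "0 < x" using x3 by simp
  have "exp 1 \<le> x" using exp_le x3 by linarith
  then have "ln (exp 1) \<le> ln x" using x0 by (subst ln_le_cancel_iff) auto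
  then show L1: "1 \<le> ln x" by simp
  show ne4: "4 \<le> x powr eps" using x e by (intro powr_ge_from) auto
  have "4 \<le> x powr (1 - eps)" using x e by (intro powr_ge_from) auto
  then have "4 * x powr eps \<le> x powr (1 - eps) * x powr eps" using x0 by (intro mult_right_mono) auto
  also have "\<dots> = x" using x0 by (simp add: powr_add[symmetric])
  finally show "4 * x powr eps \<le> x" .
  have h: "8/(eps*u0) \<le> x powr (eps/2)" using x e u0 by (intro powr_ge_from) auto
  have lb: "ln x \<le> x powr (eps/2) / (eps/2)" using x3 e by (intro ln_powr_bound) auto
  have xe: "x powr eps = x powr (eps/2) * x powr (eps/2)" using x0 by (simp add: powr_add[symmetric])
  have xe0: "0 < x powr (eps/2)" using x0 by simp
  have "2 * ln x / x powr eps \<le> 2 * (x powr (eps/2) / (eps/2)) / x powr eps"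
    using lb x0 by (intro divide_right_mono mult_left_mono) auto
  also have "\<dots> = (4/eps) / x powr (eps/2)" unfolding xe using e xe0 by (simp add: field_simps)
  also have "\<dots> \<le> (4/eps) / (8/(eps*u0))"
  proof (rule divide_left_mono)
    show "8/(eps*u0) \<le> x powr (eps/2)" by (rule h)
    show "0 \<le> 4/eps" using e by simp
    have "0 < 8/(eps*u0)" using e u0 by simp
    then show "0 < x powr (eps/2) * (8/(eps*u0))" using xe0 by simp
  qed
  also have "\<dots> = u0/2" using e u0 by (simp add: field_simps)
  also have "\<dots> < u0" using u0 by simp
  finally show "2 * ln x / x powr eps < u0" .
qed

lemma levels:
  fixes x ne :: real
  assumes x1: "1 \<le> x" and ne: "4 \<le> ne" "4 * ne \<le> x"
  shows "\<exists>j. j \<le> nat (j0 x) \<and> ne/2 \<le> x / 2^(Suc j) \<and> x / 2^(Suc j) < 2*ne \<and> x / (4*ne) < 2^j"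
proof -
  define jn where "jn = nat (j0 x)"
  have jn': "j0 x = int jn" using j0_props(4)[OF x1] by (simp add: jn_def)
  have J1: "2^jn \<le> x" using j0_props(2)[OF x1] by (simp add: jn' powr_realpow)
  have J2: "x < 2 * 2^jn" using j0_props(3)[OF x1] by (simp add: jn' powr_realpow[symmetric] powr_add)
  define t where "t = nat \<lceil>log 2 ne\<rceil>"
  have lg0: "0 \<le> log 2 ne" using ne by simp
  have T1: "ne \<le> 2^t"
  proof -
    have "log 2 ne \<le> real t" unfolding t_def using lg0 by linarith
    then have "2 powr (log 2 ne) \<le> 2 powr (real t)" by (intro powr_mono) auto
    then show ?thesis using ne by (simp add: powr_realpow)
  qed
  have T2: "2^t < 2 * ne"
  proof -
    have "real t < log 2 ne + 1" unfolding t_def using lg0 by linarith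
    then have "2 powr (real t) < 2 powr (log 2 ne + 1)" by (intro powr_less_mono) auto
    then show ?thesis using ne by (simp add: powr_realpow powr_add)
  qed
  have "(2::real)^t < 2^jn" using T2 ne J2 by linarith
  then have tj: "t < jn" by (simp add: power_strict_increasing_iff)
  define j where "j = jn - t"
  have jt: "(2::real)^j * 2^t = 2^jn" unfolding j_def using tj by (simp add: power_add[symmetric])
  have p0: "(0::real) < 2^t" "(0::real) < 2^j" by auto
  have mu: "x / 2^(Suc j) = x * 2^t / (2 * 2^jn)" unfolding jt[symmetric] using p0 by (simp add: field_simps)
  show ?thesis
  proof (intro exI conjI)
    show "j \<le> nat (j0 x)" by (simp add: j_def jn_def)
    have "ne/2 \<le> 2^t/2" using T1 by simp
    also have "2^t / 2 \<le> x * 2^t / (2 * 2^jn)" using J1 p0 by (simp add: field_simps)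
    finally show "ne/2 \<le> x / 2^(Suc j)" unfolding mu .
    have "x * 2^t / (2 * 2^jn) < 2^t" using J2 p0 by (simp add: field_simps)
    then show "x / 2^(Suc j) < 2*ne" unfolding mu using T2 by linarith
    have "x / (4*ne) < 2 * 2^jn / (2 * 2^t)"
    proof (rule frac_less2)
      show "0 < x" using x1 by simp
      show "x \<le> 2 * 2^jn" using J2 by simp
      show "(0::real) < 2 * 2^t" by simp
      show "(2::real) * 2^t < 4 * ne" using T2 by simp
    qed
    also have "\<dots> = 2^j" using jt p0 by (simp add: field_simps)
    finally show "x / (4*ne) < 2^j" .
  qed
qed

lemma numeric_final:
  fixes x ne mu L g2 eps P pj :: real and aL aR :: nat
  assumes x1: "1 \<le> x" and ne: "ne = x powr eps" "0 < ne"
    and mu: "0 < mu" "mu < 2*ne" and pj: "x / (4*ne) < pj"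
    and a: "1 \<le> aL" "1 \<le> aR" "real aL \<le> 2*mu" "real aR \<le> mu"
    and ph: "phiKL mu (real aL) + phiKL mu (real aR) \<le> g2 * ln x"
    and P: "P = (mu^aL / fact aL * exp (- mu)) * (mu^aR / fact aR * exp (- mu))"
  shows "1/(128 * (exp 1)^2) / x powr (g2 + 4*eps) \<le> pj * (pj / x^2) * P"
proof -
  have x0: "0 < x" using x1 by simp
  define e where "e = exp (1::real)"
  have e0: "0 < e" by (simp add: e_def)
  have P1: "exp (- phiKL mu (real aL)) / (e * real aL) \<le> mu^aL / fact aL * exp (- mu)"
    unfolding e_def by (rule poisson_pmf_lower[OF mu(1) a(1)])
  have P2: "exp (- phiKL mu (real aR)) / (e * real aR) \<le> mu^aR / fact aR * exp (- mu)"
    unfolding e_def by (rule poisson_pmf_lower[OF mu(1) a(2)])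
  have aL0: "0 < real aL" "0 < real aR" using a by auto
  have "exp (- phiKL mu (real aL)) / (e * real aL) * (exp (- phiKL mu (real aR)) / (e * real aR)) \<le> P"
    unfolding P using P1 P2 aL0 e0 mu by (intro mult_mono) auto
  moreover have "exp (- phiKL mu (real aL)) / (e * real aL) * (exp (- phiKL mu (real aR)) / (e * real aR))
      = exp (- (phiKL mu (real aL) + phiKL mu (real aR))) / (e^2 * (real aL * real aR))"
    by (simp add: exp_add[symmetric] power2_eq_square field_simps)
  moreover have "x powr (- g2) / (e^2 * (8 * ne^2)) \<le> exp (- (phiKL mu (real aL) + phiKL mu (real aR))) / (e^2 * (real aL * real aR))"
  proof (rule frac_le)
    have "x powr (- g2) = exp (- (g2 * ln x))" using x0 by (simp add: powr_def)
    also have "\<dots> \<le> exp (- (phiKL mu (real aL) + phiKL mu (real aR)))" using ph by simp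
    finally show "x powr (- g2) \<le> exp (- (phiKL mu (real aL) + phiKL mu (real aR)))" .
    show "0 \<le> exp (- (phiKL mu (real aL) + phiKL mu (real aR)))" by simp
    show "0 < e^2 * (real aL * real aR)" using aL0 e0 by simp
    have "real aL * real aR \<le> (2*mu) * mu" using a aL0 mu by (intro mult_mono) auto
    also have "\<dots> = 2 * mu^2" by (simp add: power2_eq_square)
    also have "\<dots> \<le> 2 * (2*ne)^2" using mu by (intro mult_left_mono power_mono) auto
    also have "\<dots> = 8 * ne^2" by (simp add: power2_eq_square)
    finally show "e^2 * (real aL * real aR) \<le> e^2 * (8 * ne^2)" using e0 by simp
  qed
  ultimately have PB: "x powr (- g2) / (e^2 * (8 * ne^2)) \<le> P" by linarith
  have pj0: "0 < pj" using pj x0 ne by (smt (verit) divide_pos_pos)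
  have PJ: "1 / (16 * ne^2) \<le> pj * (pj / x^2)"
  proof -
    have "(x / (4*ne))^2 \<le> pj^2" using pj x0 ne by (intro power_mono) auto
    moreover have "(x / (4*ne))^2 = x^2 * (1 / (16 * ne^2))" by (simp add: power_divide power_mult_distrib)
    ultimately have "x^2 * (1 / (16 * ne^2)) \<le> pj^2" by simp
    then show ?thesis using x0 by (simp add: power2_eq_square field_simps)
  qed
  have "1 / (16 * ne^2) * (x powr (- g2) / (e^2 * (8 * ne^2))) \<le> pj * (pj / x^2) * P"
    using PJ PB by (intro mult_mono) (auto intro: order_trans[OF _ PB])
  moreover have "1 / (16 * ne^2) * (x powr (- g2) / (e^2 * (8 * ne^2))) = 1/(128 * e^2) / x powr (g2 + 4*eps)"
  proof -
    have n4: "ne^2 * ne^2 = x powr (4*eps)" unfolding ne(1) using x0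
      by (simp add: power2_eq_square powr_add[symmetric])
    have "x powr (- g2) = 1 / x powr g2" by (simp add: powr_minus_divide)
    moreover have "x powr (g2 + 4*eps) = x powr g2 * x powr (4*eps)" by (simp add: powr_add)
    ultimately show ?thesis using n4 ne e0 x0 by (simp add: field_simps power2_eq_square)
  qed
  ultimately show ?thesis by (simp add: e_def)
qed

theorem theorem3:
  fixes gamma :: real
  assumes "0 < gamma" and "gamma < 1"
  shows "\<exists>delta::real. delta < 1 \<and> (\<exists>c::real. c > 0 \<and> (\<exists>n0::nat. \<forall>n::nat. n \<ge> n0 \<longrightarrow>
           (\<forall>(M :: 'w measure) N.
              poisson_process M N (\<lambda>x. real n * indicator {0..1} x) \<longrightarrow>
              (\<integral>\<^sup>+\<omega>. (\<integral>\<^sup>+x. ennreal ((f_tilde_H (real n) gamma (N \<omega>) x - indicator {0..1} x)\<^sup>2) \<partial>lborel) \<partial>M)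
                \<ge> ennreal (c / real n powr delta))))"
proof -
  define g1 where "g1 = gamma + (1-gamma)/4"
  define g2 where "g2 = gamma + (1-gamma)/2"
  define eps where "eps = (1-gamma)/16"
  define delta :: real where "delta = g2 + 4*eps"
  define c :: real where "c = 1/(128 * (exp 1)^2)"
  have g: "0 < gamma" "gamma < g1" "g1 < g2" "0 < g1" using assms by (auto simp: g1_def g2_def add_pos_pos)
  have e: "0 < eps" "eps < 1" using assms by (auto simp: eps_def)
  have d1: "delta < 1" using assms unfolding delta_def g2_def eps_def by (simp add: field_simps)
  have c0: "c > 0" by (simp add: c_def)
  obtain u0 where u0: "u0 > 0" and U: "\<And>u. 0 < u \<Longrightarrow> u < u0 \<Longrightarrow>
      Ffun gamma u \<le> 2 * sqrt g1 \<and> sqrt u * (sqrt g1 + sqrt u) \<le> 1/2 \<and> Gfun g1 u \<le> g2"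
    using u0_exists[OF g(1,2,3)] by blast
  define X0 where "X0 = max (max 3 ((8/(eps*u0)) powr (2/eps))) (max (4 powr (1/eps)) (4 powr (1/(1-eps))))"
  define n0 where "n0 = nat \<lceil>X0\<rceil>"
  have main: "ennreal (c / real n powr delta)
      \<le> (\<integral>\<^sup>+\<omega>. (\<integral>\<^sup>+x. ennreal ((f_tilde_H (real n) gamma (N \<omega>) x - indicator {0..1} x)\<^sup>2) \<partial>lborel) \<partial>M)"
    if n: "n \<ge> n0" and pp: "poisson_process M N (\<lambda>x. real n * indicator {0..1} x)"
    for n and M :: "'w measure" and N
  proof -
    define x where "x = real n"
    have "X0 \<le> real n0" unfolding n0_def by (rule real_nat_ceiling_ge)
    also have "\<dots> \<le> x" using n by (simp add: x_def)
    finally have X: "X0 \<le> x" .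
    have LN: "1 \<le> ln x" "4 \<le> x powr eps" "4 * x powr eps \<le> x" "2 * ln x / x powr eps < u0"
      using large_n[OF e u0] X unfolding X0_def by auto
    have x1: "1 \<le> x" using X unfolding X0_def by simp
    define ne where "ne = x powr eps"
    have ne0: "0 < ne" using LN by (simp add: ne_def)
    obtain j where j: "j \<le> nat (j0 x)" "ne/2 \<le> x / 2^(Suc j)" "x / 2^(Suc j) < 2*ne" "x / (4*ne) < 2^j"
      using levels[OF x1, of ne] LN unfolding ne_def by auto
    define mu where "mu = x / 2^(Suc j)"
    define L where "L = ln x"
    define u where "u = L / mu"
    have mu2: "2 \<le> mu" using j(2) LN by (simp add: mu_def ne_def)
    have u0': "0 < u" using LN mu2 by (simp add: u_def L_def)
    have "u \<le> 2 * L / ne"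
    proof -
      have "L / mu \<le> L / (ne/2)" using j(2) LN ne0 by (intro divide_left_mono) (auto simp: mu_def L_def)
      then show ?thesis by (simp add: u_def mult.commute)
    qed
    then have uu: "u < u0" using LN by (simp add: L_def ne_def)
    from U[OF u0' uu] have UU: "Ffun gamma u \<le> 2 * sqrt g1" "sqrt u * (sqrt g1 + sqrt u) \<le> 1/2" "Gfun g1 u \<le> g2"
      by auto
    obtain aL aR :: nat where A: "1 \<le> aL" "1 \<le> aR" "1 \<le> real aL - real aR" "real aL \<le> 2*mu" "real aR \<le> mu"
      "real aL - real aR \<ge> sqrt (2*gamma*L*((real aL + real aR) + sqrt (2*gamma*L*(real aL + real aR)) + 3*gamma*L)) + gamma*L/3"
      "phiKL mu (real aL) + phiKL mu (real aR) \<le> g2 * L"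
    proof -
      have L1: "1 \<le> L" using LN by (simp add: L_def)
      show ?thesis using count_choice[OF g(1) g(4) L1 mu2 u_def UU] that by blast
    qed
    define jn where "jn = nat (j0 x)"
    have jn': "j0 (real n) = int jn" using j0_props(4)[OF x1] by (simp add: jn_def x_def)
    have EB: "ennreal (2^j * (2^j / (real n)^2) * ((mu^aL / fact aL * exp (- mu)) * (mu^aR / fact aR * exp (- mu))))
      \<le> (\<integral>\<^sup>+\<omega>. (\<integral>\<^sup>+x. ennreal ((f_tilde_H (real n) gamma (N \<omega>) x - indicator {0..1} x)\<^sup>2) \<partial>lborel) \<partial>M)"
      using expectation_bound[OF pp _ g(1) jn' _ A(3), of j] A(6) x1 j(1)
      unfolding mu_def x_def L_def jn_def by simp
    have NF: "c / x powr delta \<le> 2^j * (2^j / x^2) * ((mu^aL / fact aL * exp (- mu)) * (mu^aR / fact aR * exp (- mu)))"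
      unfolding c_def delta_def
      by (rule numeric_final[OF x1 ne_def[unfolded] ne0 _ _ j(4) A(1,2,4,5) A(7)[unfolded L_def] refl])
         (use mu2 j(3) in \<open>auto simp: mu_def\<close>)
    show ?thesis using order_trans[OF ennreal_leI[OF NF[unfolded x_def]] EB] by simp
  qed
  show ?thesis
    by (intro exI[of _ delta] conjI d1 exI[of _ c] c0 exI[of _ n0] allI impI) (use main in auto)
qed


end
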